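(* Let $D\subseteq\mathbb R^d$ ($d\in\{1,2,3\}$) be open, bounded and of class $S$, $f_0,\phi_1,\dots,\phi_m\in L^2(D)$, $f(x,z):=f_0(x)+\sum_iz_i\phi_i(x)$, $\Xi\subset\mathbb R^m$ compact, $\alpha\in\mathbb R$, $F\colon L^2(D)\to\mathbb R$ Fréchet differentiable, $u^*\in L^2(D)$, and $y^*:=\hat{\mathcal S}(u^* )\in\mathcal C(\bar D\times\Xi)$. Then the following are equivalent: (a) there exists a nonnegative regular Borel measure $\mu^*\in\mathcal M(\bar D\times\Xi)$ with \[ \langle DF(u^* ),h\rangle+\int_{\bar D\times\Xi}[A^{-1}h](x)\,d\mu^*(x,z)=0\ \ \forall h\in L^2(D),\quad y^*(x,z)\le\alpha\ \ \forall(x,z)\in\bar D\times\Xi,\quad\int_{\bar D\times\Xi}(y^*(x,z)-\alpha)\,d\mu^*(x,z)=0; \] (b) there exist $\lambda^*\ge0$ and a Radon probability measure $\tilde\mu$ supported on $M(u^* )$ with \[ \langle DF(u^* ),h\rangle+\lambda^*\int_{\bar D\times\Xi}[A^{-1}h](x)\,d\tilde\mu(x,z)=0\ \ \forall h\in L^2(D),\quad \max_{(x,z)\in\bar D\times\Xi}y^*(x,z)\le\alpha,\quad\lambda^*\Big(\max_{(x,z)\in\bar D\times\Xi}y^*(x,z)-\alpha\Big)=0. \]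
   Context: $D$ is of class $S$ if there exist $\gamma\in(0,1)$, $r_0>0$ with $\mathrm{meas}(B_r(x)\setminus D)\ge\gamma\,\mathrm{meas}(B_r(x))$ for all $x\in\partial D$, $r<r_0$. $A^{-1}\colon L^2(D)\to\mathcal C(\bar D)$ maps $h$ to the unique weak solution $y\in H_0^1(D)\cap\mathcal C(\bar D)$ of $-\Delta y=h$, $y|_{\partial D}=0$. $\hat{\mathcal S}(u)\in\mathcal C(\bar D\times\Xi)$ is given by $[\hat{\mathcal S}(u)](\cdot,z)=A^{-1}(u+f(\cdot,z))$ for $z\in\Xi$. $M(u):=\{(x,z)\in\bar D\times\Xi\mid[\hat{\mathcal S}(u)](x,z)=\max_{(x',z')\in\bar D\times\Xi}[\hat{\mathcal S}(u)](x',z')\}$. *)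

theory Defs
  imports "HOL-Probability.Probability"
begin

definition class_S :: "(real^'n) set \<Rightarrow> bool" where
  "class_S D \<longleftrightarrow> (\<exists>\<gamma> r0. 0 < \<gamma> \<and> \<gamma> < 1 \<and> 0 < r0 \<and>
     (\<forall>x\<in>frontier D. \<forall>r. 0 < r \<and> r < r0 \<longrightarrow>
        measure lebesgue (ball x r - D) \<ge> \<gamma> * measure lebesgue (ball x r)))"

(* L^2(D): measurable functions square integrable over D (values outside D irrelevant) *)
definition L2 :: "(real^'n) set \<Rightarrow> (real^'n \<Rightarrow> real) set" where
  "L2 D = {f. f \<in> borel_measurable lebesgue \<and> set_integrable lebesgue D (\<lambda>x. (f x)\<^sup>2)}"

definition L2_norm :: "(real^'n) set \<Rightarrow> (real^'n \<Rightarrow> real) \<Rightarrow> real" where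
  "L2_norm D f = sqrt (LINT x:D|lebesgue. (f x)\<^sup>2)"

(* F is a well-defined functional on L^2(D) (respects a.e. equality on D),
   Frechet differentiable at u with derivative DF (a bounded linear functional on L^2(D)) *)
definition L2_frechet_deriv ::
  "(real^'n) set \<Rightarrow> ((real^'n \<Rightarrow> real) \<Rightarrow> real) \<Rightarrow> (real^'n \<Rightarrow> real)
     \<Rightarrow> ((real^'n \<Rightarrow> real) \<Rightarrow> real) \<Rightarrow> bool" where
  "L2_frechet_deriv D F u DF \<longleftrightarrow>
     (\<forall>f\<in>L2 D. \<forall>g\<in>L2 D. (AE x in lebesgue. x \<in> D \<longrightarrow> f x = g x) \<longrightarrow> F f = F g) \<and>
     (\<forall>f\<in>L2 D. \<forall>g\<in>L2 D. DF (\<lambda>x. f x + g x) = DF f + DF g) \<and>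
     (\<forall>f\<in>L2 D. \<forall>c. DF (\<lambda>x. c * f x) = c * DF f) \<and>
     (\<exists>C. \<forall>h\<in>L2 D. \<bar>DF h\<bar> \<le> C * L2_norm D h) \<and>
     (\<forall>e>0. \<exists>\<delta>>0. \<forall>h\<in>L2 D. L2_norm D h < \<delta> \<longrightarrow>
        \<bar>F (\<lambda>x. u x + h x) - F u - DF h\<bar> \<le> e * L2_norm D h)"

(* C^infinity functions: every iterated partial derivative exists *)
definition smooth_fun :: "(real^'n \<Rightarrow> real) \<Rightarrow> bool" where
  "smooth_fun f \<longleftrightarrow> (\<exists>S. f \<in> S \<and> (\<forall>g\<in>S. (\<forall>x. g differentiable (at x)) \<and>
       (\<forall>i. (\<lambda>x. frechet_derivative g (at x) (axis i 1)) \<in> S)))"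

definition pd :: "(real^'n \<Rightarrow> real) \<Rightarrow> 'n \<Rightarrow> real^'n \<Rightarrow> real" where
  "pd g i x = frechet_derivative g (at x) (axis i 1)"

definition test_fn :: "(real^'n) set \<Rightarrow> (real^'n \<Rightarrow> real) \<Rightarrow> bool" where
  "test_fn D \<phi> \<longleftrightarrow> smooth_fun \<phi> \<and> compact (closure {x. \<phi> x \<noteq> 0})
      \<and> closure {x. \<phi> x \<noteq> 0} \<subseteq> D"

definition weak_grad :: "(real^'n) set \<Rightarrow> (real^'n \<Rightarrow> real) \<Rightarrow> (real^'n \<Rightarrow> real^'n) \<Rightarrow> bool" where
  "weak_grad D y G \<longleftrightarrow> (\<forall>i. (\<lambda>x. G x $ i) \<in> borel_measurable lebesgue) \<and>
     (\<forall>\<phi> i. test_fn D \<phi> \<longrightarrow>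
        set_integrable lebesgue D (\<lambda>x. y x * pd \<phi> i x) \<and>
        set_integrable lebesgue D (\<lambda>x. G x $ i * \<phi> x) \<and>
        (LINT x:D|lebesgue. y x * pd \<phi> i x) = - (LINT x:D|lebesgue. G x $ i * \<phi> x))"

definition H01 :: "(real^'n) set \<Rightarrow> (real^'n \<Rightarrow> real) set" where
  "H01 D = {y. y \<in> L2 D \<and> (\<exists>G. weak_grad D y G \<and> (\<forall>i. (\<lambda>x. G x $ i) \<in> L2 D) \<and>
      (\<exists>\<psi>. (\<forall>k. test_fn D (\<psi> k)) \<and>
         (\<lambda>k. LINT x:D|lebesgue. (y x - \<psi> k x)\<^sup>2 + (\<Sum>i\<in>UNIV. (G x $ i - pd (\<psi> k) i x)\<^sup>2))
           \<longlonglongrightarrow> 0))}"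

definition poisson_sol :: "(real^'n) set \<Rightarrow> (real^'n \<Rightarrow> real) \<Rightarrow> (real^'n \<Rightarrow> real) \<Rightarrow> bool" where
  "poisson_sol D h y \<longleftrightarrow> y \<in> H01 D \<and> continuous_on (closure D) y \<and>
     (\<forall>x\<in>frontier D. y x = 0) \<and>
     (\<exists>G. weak_grad D y G \<and> (\<forall>\<phi>. test_fn D \<phi> \<longrightarrow>
        (LINT x:D|lebesgue. (\<Sum>i\<in>UNIV. G x $ i * pd \<phi> i x)) = (LINT x:D|lebesgue. h x * \<phi> x)))"

definition regular_measure :: "'a::topological_space measure \<Rightarrow> bool" where
  "regular_measure \<mu> \<longleftrightarrow> (\<forall>A\<in>sets \<mu>.
     emeasure \<mu> A = (INF U\<in>{U. open U \<and> A \<subseteq> U}. emeasure \<mu> U) \<and>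
     emeasure \<mu> A = (SUP K\<in>{K. compact K \<and> K \<subseteq> A}. emeasure \<mu> K))"

definition measure_support :: "'a::metric_space measure \<Rightarrow> 'a set" where
  "measure_support \<mu> = {p. \<forall>e>0. emeasure \<mu> (ball p e) > 0}"

definition rhs_f :: "(real^'n \<Rightarrow> real) \<Rightarrow> ('m::finite \<Rightarrow> real^'n \<Rightarrow> real) \<Rightarrow> real^'n \<Rightarrow> real^'m \<Rightarrow> real" where
  "rhs_f f0 \<phi> x z = f0 x + (\<Sum>i\<in>UNIV. z $ i * \<phi> i x)"

definition Shat :: "((real^'n \<Rightarrow> real) \<Rightarrow> (real^'n \<Rightarrow> real)) \<Rightarrow> (real^'n \<Rightarrow> real)
    \<Rightarrow> ('m::finite \<Rightarrow> real^'n \<Rightarrow> real) \<Rightarrow> (real^'n \<Rightarrow> real) \<Rightarrow> (real^'n) \<times> (real^'m) \<Rightarrow> real" where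
  "Shat Ainv f0 \<phi> u p = Ainv (\<lambda>x'. u x' + rhs_f f0 \<phi> x' (snd p)) (fst p)"

definition Mset :: "(real^'n) set \<Rightarrow> (real^'m::finite) set \<Rightarrow> ((real^'n \<Rightarrow> real) \<Rightarrow> (real^'n \<Rightarrow> real))
    \<Rightarrow> (real^'n \<Rightarrow> real) \<Rightarrow> ('m \<Rightarrow> real^'n \<Rightarrow> real) \<Rightarrow> (real^'n \<Rightarrow> real) \<Rightarrow> ((real^'n) \<times> (real^'m)) set" where
  "Mset D \<Xi> Ainv f0 \<phi> u = {p \<in> closure D \<times> \<Xi>.
      Shat Ainv f0 \<phi> u p = (SUP q\<in>closure D \<times> \<Xi>. Shat Ainv f0 \<phi> u q)}"

end

theory Submission
  imports Defs
begin


definition ip :: "(real^'n) set \<Rightarrow> (real^'n \<Rightarrow> real) \<Rightarrow> (real^'n \<Rightarrow> real) \<Rightarrow> real" where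
  "ip D f g = (LINT x:D|lebesgue. f x * g x)"

lemma L2_mult_integrable:
  assumes D: "D \<in> sets lebesgue" and f: "f \<in> L2 D" and g: "g \<in> L2 D"
  shows "set_integrable lebesgue D (\<lambda>x. f x * g x)"
proof -
  have fm: "f \<in> borel_measurable lebesgue" and gm: "g \<in> borel_measurable lebesgue"
    and fi: "integrable lebesgue (\<lambda>x. indicator D x *\<^sub>R (f x)\<^sup>2)"
    and gi: "integrable lebesgue (\<lambda>x. indicator D x *\<^sub>R (g x)\<^sup>2)"
    using f g by (auto simp: L2_def set_integrable_def)
  have "integrable lebesgue (\<lambda>x. indicator D x *\<^sub>R (f x)\<^sup>2 + indicator D x *\<^sub>R (g x)\<^sup>2)"
    using fi gi by (rule Bochner_Integration.integrable_add)
  then show ?thesis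
    unfolding set_integrable_def
  proof (rule Bochner_Integration.integrable_bound)
    show "(\<lambda>x. indicator D x *\<^sub>R (f x * g x)) \<in> borel_measurable lebesgue"
      using fm gm D by measurable
    show "AE x in lebesgue. norm (indicator D x *\<^sub>R (f x * g x))
        \<le> norm (indicator D x *\<^sub>R (f x)\<^sup>2 + indicator D x *\<^sub>R (g x)\<^sup>2)"
    proof (rule AE_I2)
      fix x
      have "0 \<le> (\<bar>f x\<bar> - \<bar>g x\<bar>)\<^sup>2" by simp
      then have "2*(\<bar>f x\<bar>*\<bar>g x\<bar>) \<le> (f x)\<^sup>2 + (g x)\<^sup>2"
        by (simp add: power2_eq_square algebra_simps)
      moreover have "0 \<le> \<bar>f x\<bar>*\<bar>g x\<bar>" by simp
      ultimately have "\<bar>f x * g x\<bar> \<le> (f x)\<^sup>2 + (g x)\<^sup>2"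
        unfolding abs_mult by linarith
      then show "norm (indicator D x *\<^sub>R (f x * g x))
        \<le> norm (indicator D x *\<^sub>R (f x)\<^sup>2 + indicator D x *\<^sub>R (g x)\<^sup>2)"
        by (auto simp: indicator_def)
    qed
  qed
qed

lemma L2_lin:
  assumes D: "D \<in> sets lebesgue" and f: "f \<in> L2 D" and g: "g \<in> L2 D"
  shows "(\<lambda>x. a * f x + b * g x) \<in> L2 D"
proof -
  have fm: "f \<in> borel_measurable lebesgue" and gm: "g \<in> borel_measurable lebesgue"
    and fi: "integrable lebesgue (\<lambda>x. indicator D x *\<^sub>R (f x)\<^sup>2)"
    and gi: "integrable lebesgue (\<lambda>x. indicator D x *\<^sub>R (g x)\<^sup>2)"
    using f g by (auto simp: L2_def set_integrable_def)
  have "integrable lebesgue (\<lambda>x. (2*a\<^sup>2) * (indicator D x *\<^sub>R (f x)\<^sup>2) + (2*b\<^sup>2) * (indicator D x *\<^sub>R (g x)\<^sup>2))"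
    using fi gi by (intro Bochner_Integration.integrable_add Bochner_Integration.integrable_mult_right)
  then have "integrable lebesgue (\<lambda>x. indicator D x *\<^sub>R (a * f x + b * g x)\<^sup>2)"
  proof (rule Bochner_Integration.integrable_bound)
    show "(\<lambda>x. indicator D x *\<^sub>R (a * f x + b * g x)\<^sup>2) \<in> borel_measurable lebesgue"
      using fm gm D by measurable
    show "AE x in lebesgue. norm (indicator D x *\<^sub>R (a * f x + b * g x)\<^sup>2)
        \<le> norm ((2*a\<^sup>2) * (indicator D x *\<^sub>R (f x)\<^sup>2) + (2*b\<^sup>2) * (indicator D x *\<^sub>R (g x)\<^sup>2))"
    proof (rule AE_I2)
      fix x
      have "(a * f x + b * g x)\<^sup>2 \<le> 2*a\<^sup>2 * (f x)\<^sup>2 + 2*b\<^sup>2 * (g x)\<^sup>2"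
      proof -
        have "0 \<le> (a * f x - b * g x)\<^sup>2" by simp
        then show ?thesis by (simp add: power2_eq_square algebra_simps)
      qed
      moreover have "0 \<le> 2*a\<^sup>2 * (f x)\<^sup>2 + 2*b\<^sup>2 * (g x)\<^sup>2" by simp
      ultimately show "norm (indicator D x *\<^sub>R (a * f x + b * g x)\<^sup>2)
        \<le> norm ((2*a\<^sup>2) * (indicator D x *\<^sub>R (f x)\<^sup>2) + (2*b\<^sup>2) * (indicator D x *\<^sub>R (g x)\<^sup>2))"
        by (auto simp: indicator_def)
    qed
  qed
  then show ?thesis using fm gm unfolding L2_def set_integrable_def by auto
qed

lemma ip_lin_left:
  assumes D: "D \<in> sets lebesgue" and f: "f \<in> L2 D" and g: "g \<in> L2 D" and k: "k \<in> L2 D"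
  shows "ip D (\<lambda>x. a * f x + b * g x) k = a * ip D f k + b * ip D g k"
proof -
  have i1: "set_integrable lebesgue D (\<lambda>x. a * (f x * k x))"
    using L2_mult_integrable[OF D f k] by (rule set_integrable_mult_right)
  have i2: "set_integrable lebesgue D (\<lambda>x. b * (g x * k x))"
    using L2_mult_integrable[OF D g k] by (rule set_integrable_mult_right)
  have "ip D (\<lambda>x. a * f x + b * g x) k = (LINT x:D|lebesgue. a * (f x * k x) + b * (g x * k x))"
    unfolding ip_def by (simp add: algebra_simps)
  also have "\<dots> = (LINT x:D|lebesgue. a * (f x * k x)) + (LINT x:D|lebesgue. b * (g x * k x))"
    by (rule set_integral_add[OF i1 i2])
  also have "\<dots> = a * ip D f k + b * ip D g k"
    unfolding ip_def by (simp add: set_integral_mult_right)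
  finally show ?thesis .
qed

lemma ip_sym: "ip D f g = ip D g f"
  unfolding ip_def by (simp add: mult.commute)

lemma ip_nonneg: "0 \<le> ip D f f"
  unfolding ip_def set_lebesgue_integral_def
  by (rule integral_nonneg_AE) (auto simp: indicator_def)

lemma ip_zero_AE:
  assumes D: "D \<in> sets lebesgue" and f: "f \<in> L2 D" and z: "ip D f f = 0"
  shows "AE x in lebesgue. x \<in> D \<longrightarrow> f x = 0"
proof -
  have "integrable lebesgue (\<lambda>x. indicator D x *\<^sub>R (f x * f x))"
    using L2_mult_integrable[OF D f f] by (simp add: set_integrable_def)
  then have "AE x in lebesgue. indicator D x *\<^sub>R (f x * f x) = 0"
    using z unfolding ip_def set_lebesgue_integral_def
    by (subst integral_nonneg_eq_0_iff_AE[symmetric]) (auto simp: indicator_def)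
  then show ?thesis by eventually_elim (auto simp: indicator_def)
qed

lemma ip_cong:
  assumes "\<And>x. x \<in> D \<Longrightarrow> f x * g x = f' x * g' x"
  shows "ip D f g = ip D f' g'"
  unfolding ip_def set_lebesgue_integral_def using assms
  by (intro Bochner_Integration.integral_cong) (auto simp: indicator_def)



lemma smooth_fun_diff: "smooth_fun f \<Longrightarrow> f differentiable (at x)"
  unfolding smooth_fun_def by blast

lemma smooth_fun_pd: "smooth_fun f \<Longrightarrow> smooth_fun (pd f i)"
proof -
  assume "smooth_fun f"
  then obtain S where "f \<in> S" "\<forall>g\<in>S. (\<forall>x. g differentiable (at x)) \<and>
       (\<forall>i. (\<lambda>x. frechet_derivative g (at x) (axis i 1)) \<in> S)"
    unfolding smooth_fun_def by blast
  then show ?thesis unfolding smooth_fun_def pd_def by blast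
qed

lemma not_in_supp: "x \<notin> closure {x. f x \<noteq> (0::real)} \<Longrightarrow> f x = 0"
proof (rule ccontr)
  assume a: "x \<notin> closure {x. f x \<noteq> 0}" and "f x \<noteq> 0"
  then have "x \<in> {x. f x \<noteq> 0}" by simp
  then have "x \<in> closure {x. f x \<noteq> 0}" by (rule subsetD[OF closure_subset])
  then show False using a by simp
qed

lemma fd_zero_outside:
  fixes f :: "'a::real_normed_vector \<Rightarrow> real"
  assumes "f differentiable (at x)" "x \<notin> closure {y. f y \<noteq> 0}"
  shows "frechet_derivative f (at x) = (\<lambda>_. 0)"
proof -
  let ?U = "- closure {y. f y \<noteq> 0}"
  have "open ?U" by auto
  have xU: "x \<in> ?U" using assms by auto
  have c0: "((\<lambda>_. 0::real) has_derivative (\<lambda>_. 0)) (at x within UNIV)" by simp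
  have h: "\<And>y. y \<in> ?U \<Longrightarrow> (\<lambda>_. 0::real) y = f y"
    using not_in_supp[of _ f] by (metis ComplD)
  have "(f has_derivative (\<lambda>_. 0)) (at x within UNIV)"
    using has_derivative_transform_within_open[of "\<lambda>_. 0::real" "\<lambda>_. 0" x UNIV ?U f, OF c0 \<open>open ?U\<close> xU h] .
  then show ?thesis using frechet_derivative_at by metis
qed

lemma tf_pd:
  assumes "test_fn D \<phi>" shows "test_fn D (pd \<phi> i)"
proof -
  have sm: "smooth_fun \<phi>" and cp: "compact (closure {x. \<phi> x \<noteq> 0})"
    and sub: "closure {x. \<phi> x \<noteq> 0} \<subseteq> D"
    using assms unfolding test_fn_def by auto
  have "{x. pd \<phi> i x \<noteq> 0} \<subseteq> closure {x. \<phi> x \<noteq> 0}"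
  proof
    fix x assume x: "x \<in> {x. pd \<phi> i x \<noteq> 0}"
    show "x \<in> closure {x. \<phi> x \<noteq> 0}"
    proof (rule ccontr)
      assume "x \<notin> closure {x. \<phi> x \<noteq> 0}"
      then have "frechet_derivative \<phi> (at x) = (\<lambda>_. 0)"
        using fd_zero_outside smooth_fun_diff[OF sm] by blast
      then show False using x by (simp add: pd_def)
    qed
  qed
  then have s2: "closure {x. pd \<phi> i x \<noteq> 0} \<subseteq> closure {x. \<phi> x \<noteq> 0}"
    by (simp add: closure_minimal)
  then have "compact (closure {x. pd \<phi> i x \<noteq> 0})"
    using compact_Int_closed[OF cp closed_closure, of "{x. pd \<phi> i x \<noteq> 0}"]
    by (simp add: Int_absorb1)
  then show ?thesis using s2 sub smooth_fun_pd[OF sm] unfolding test_fn_def by auto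
qed

lemma tf_cont: "test_fn D \<phi> \<Longrightarrow> continuous_on S \<phi>"
  unfolding test_fn_def
  by (meson continuous_at_imp_continuous_on differentiable_imp_continuous_within smooth_fun_diff)

lemma tf_zero: "test_fn D \<phi> \<Longrightarrow> x \<notin> closure {x. \<phi> x \<noteq> 0} \<Longrightarrow> \<phi> x = 0"
  by (rule not_in_supp)

lemma tf_zero':
  assumes "test_fn D \<phi>" "x \<notin> D" shows "\<phi> x = 0"
proof -
  have "x \<notin> closure {x. \<phi> x \<noteq> 0}" using assms unfolding test_fn_def by blast
  then show ?thesis by (rule not_in_supp)
qed

lemma tf_L2:
  assumes D: "D \<in> sets lebesgue" and t: "test_fn D \<phi>"
  shows "\<phi> \<in> L2 D"
proof -
  let ?C = "closure {x. \<phi> x \<noteq> 0}"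
  have cp: "compact ?C" and sub: "?C \<subseteq> D" using t unfolding test_fn_def by auto
  have ct: "continuous_on UNIV \<phi>" using tf_cont[OF t] .
  then have mb: "\<phi> \<in> borel_measurable borel" by (rule borel_measurable_continuous_onI)
  have ml: "\<phi> \<in> borel_measurable lebesgue" by (rule measurable_completion) (simp add: mb)
  have Cb: "?C \<in> sets borel" by simp
  have meas: "(\<lambda>x. indicator ?C x *\<^sub>R (\<phi> x)\<^sup>2) \<in> borel_measurable lborel"
    using mb Cb by simp
  have "integrable lborel (\<lambda>x. indicator ?C x *\<^sub>R (\<phi> x)\<^sup>2)"
    by (rule borel_integrable_compact[OF cp]) (intro continuous_intros continuous_on_subset[OF ct], auto)
  then have "integrable lebesgue (\<lambda>x. indicator ?C x *\<^sub>R (\<phi> x)\<^sup>2)"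
    using integrable_completion[OF meas] by simp
  moreover have eqf: "(\<lambda>x. indicator ?C x *\<^sub>R (\<phi> x)\<^sup>2) = (\<lambda>x. indicator D x *\<^sub>R (\<phi> x)\<^sup>2)"
  proof
    fix x show "indicator ?C x *\<^sub>R (\<phi> x)\<^sup>2 = indicator D x *\<^sub>R (\<phi> x)\<^sup>2"
      using sub tf_zero[OF t, of x] by (cases "x \<in> ?C"; cases "x \<in> D") auto
  qed
  ultimately have "integrable lebesgue (\<lambda>x. indicator D x *\<^sub>R (\<phi> x)\<^sup>2)" by simp
  then show ?thesis using ml unfolding L2_def set_integrable_def by auto
qed

lemma tf_line_deriv:
  assumes t: "test_fn D \<phi>"
  shows "((\<lambda>s. \<phi> (x + s *\<^sub>R axis i 1)) has_real_derivative pd \<phi> i (x + t *\<^sub>R axis i 1)) (at t)"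
proof -
  let ?e = "axis i (1::real)"
  let ?y = "x + t *\<^sub>R ?e"
  have sm: "smooth_fun \<phi>" using t unfolding test_fn_def by auto
  have d: "(\<phi> has_derivative frechet_derivative \<phi> (at ?y)) (at ?y)"
    using smooth_fun_diff[OF sm] frechet_derivative_works by blast
  have lin: "linear (frechet_derivative \<phi> (at ?y))" using d has_derivative_linear by blast
  have l: "((\<lambda>s. x + s *\<^sub>R ?e) has_derivative (\<lambda>s. s *\<^sub>R ?e)) (at t)"
    by (rule has_derivative_eq_rhs, (rule derivative_intros)+) auto
  have 1: "((\<lambda>s. \<phi> (x + s *\<^sub>R ?e)) has_derivative (\<lambda>s. frechet_derivative \<phi> (at ?y) (s *\<^sub>R ?e))) (at t)"
    using has_derivative_compose[OF l d] by (simp add: o_def)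
  have eq: "(\<lambda>s. frechet_derivative \<phi> (at ?y) (s *\<^sub>R ?e)) = (*) (pd \<phi> i ?y)"
  proof
    fix s show "frechet_derivative \<phi> (at ?y) (s *\<^sub>R ?e) = pd \<phi> i ?y * s"
      unfolding pd_def linear_scale[OF lin] by simp
  qed
  show ?thesis unfolding has_field_derivative_def using 1 unfolding eq .
qed



lemma cs_interval:
  fixes f :: "real \<Rightarrow> real"
  assumes ab: "a < b" and cf: "continuous_on {a..b} f"
  shows "(integral {a..b} f)\<^sup>2 \<le> (b - a) * integral {a..b} (\<lambda>t. (f t)\<^sup>2)"
proof -
  let ?I = "integral {a..b} f" and ?J = "integral {a..b} (\<lambda>t. (f t)\<^sup>2)"
  let ?L = "b - a"
  define s where "s = ?I / ?L"
  have L: "?L > 0" using ab by simp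
  have i1: "f integrable_on {a..b}" using cf by (rule integrable_continuous_interval)
  have i2: "(\<lambda>t. (f t)\<^sup>2) integrable_on {a..b}"
    by (rule integrable_continuous_interval) (intro continuous_intros cf)
  have i3: "(\<lambda>t. 2 * s * f t) integrable_on {a..b}"
    by (rule integrable_continuous_interval) (intro continuous_intros cf)
  have "0 \<le> integral {a..b} (\<lambda>t. (f t - s)\<^sup>2)"
    by (rule integral_nonneg) (auto intro!: integrable_continuous_interval continuous_intros cf)
  also have "integral {a..b} (\<lambda>t. (f t - s)\<^sup>2) = integral {a..b} (\<lambda>t. (f t)\<^sup>2 - 2 * s * f t + s\<^sup>2)"
    by (simp add: power2_eq_square algebra_simps)
  also have "\<dots> = ?J - 2 * s * ?I + s\<^sup>2 * ?L"
  proof -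
    have c: "(\<lambda>t. s\<^sup>2) integrable_on {a..b}" by (rule integrable_const_ivl)
    have d: "(\<lambda>t. (f t)\<^sup>2 - 2 * s * f t) integrable_on {a..b}" using i2 i3 by (rule integrable_diff)
    have "integral {a..b} (\<lambda>t. (f t)\<^sup>2 - 2 * s * f t + s\<^sup>2)
        = integral {a..b} (\<lambda>t. (f t)\<^sup>2 - 2 * s * f t) + integral {a..b} (\<lambda>t. s\<^sup>2)"
      by (rule integral_add[OF d c])
    also have "integral {a..b} (\<lambda>t. (f t)\<^sup>2 - 2 * s * f t) = ?J - integral {a..b} (\<lambda>t. 2 * s * f t)"
      by (rule integral_diff[OF i2 i3])
    also have "integral {a..b} (\<lambda>t. 2 * s * f t) = 2 * s * ?I"
      by (simp add: integral_mult_right)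
    also have "integral {a..b} (\<lambda>t. s\<^sup>2) = s\<^sup>2 * ?L" using ab by simp
    finally show ?thesis .
  qed
  finally have "0 \<le> ?J - 2 * s * ?I + s\<^sup>2 * ?L" .
  moreover have "2 * s * ?I - s\<^sup>2 * ?L = ?I\<^sup>2 / ?L"
  proof -
    have sL: "s * ?L = ?I" unfolding s_def using L by simp
    have "s\<^sup>2 * ?L = s * (s * ?L)" by (simp add: power2_eq_square)
    also have "\<dots> = s * ?I" using sL by simp
    finally have "2 * s * ?I - s\<^sup>2 * ?L = s * ?I" by simp
    also have "s * ?I = ?I\<^sup>2 / ?L" unfolding s_def by (simp add: power2_eq_square)
    finally show ?thesis .
  qed
  ultimately have "?I\<^sup>2 / ?L \<le> ?J" by linarith
  then show ?thesis using L by (simp add: field_simps mult.commute)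
qed

lemma poincare_pointwise:
  fixes g dg :: "real^'n \<Rightarrow> real" and e :: "real^'n"
  assumes R: "R > 0" and e: "norm e = 1"
    and deriv: "\<And>x t. ((\<lambda>s. g (x + s *\<^sub>R e)) has_real_derivative dg (x + t *\<^sub>R e)) (at t)"
    and cdg: "continuous_on UNIV dg"
    and out: "\<And>x. norm x \<ge> R \<Longrightarrow> g x = 0"
  shows "(g x)\<^sup>2 \<le> (2*R) * integral {-2*R..0} (\<lambda>t. (dg (x + t *\<^sub>R e))\<^sup>2)"
proof (cases "norm x \<ge> R")
  case True
  have "0 \<le> integral {-2*R..0} (\<lambda>t. (dg (x + t *\<^sub>R e))\<^sup>2)"
    by (rule integral_nonneg)
       (auto intro!: integrable_continuous_interval continuous_intros continuous_on_compose2[OF cdg])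
  then show ?thesis using True out R by simp
next
  case False
  let ?f = "\<lambda>t. dg (x + t *\<^sub>R e)"
  have cf: "continuous_on {-2*R..0} ?f"
    by (auto intro!: continuous_intros continuous_on_compose2[OF cdg])
  have "(?f has_integral (g (x + 0 *\<^sub>R e) - g (x + (-2*R) *\<^sub>R e))) {-2*R..0}"
  proof (rule fundamental_theorem_of_calculus)
    show "-2*R \<le> 0" using R by simp
    fix t assume "t \<in> {-2*R..0}"
    show "((\<lambda>s. g (x + s *\<^sub>R e)) has_vector_derivative ?f t) (at t within {-2*R..0})"
      using deriv[of x t] by (simp add: has_real_derivative_iff_has_vector_derivative has_vector_derivative_at_within)
  qed
  moreover have "g (x + (-2*R) *\<^sub>R e) = 0"
  proof (rule out)
    have "norm ((-2*R) *\<^sub>R e) \<le> norm (x + (-2*R) *\<^sub>R e) + norm x"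
      by (metis add_diff_cancel_left' norm_triangle_ineq4 add.commute)
    then show "R \<le> norm (x + (-2*R) *\<^sub>R e)" using e R False by simp
  qed
  ultimately have "integral {-2*R..0} ?f = g x" by (simp add: integral_unique)
  then show ?thesis using cs_interval[of "-2*R" 0 ?f] cf R by simp
qed

lemma poincare_nn:
  fixes g dg :: "real^'n \<Rightarrow> real" and e :: "real^'n"
  assumes R: "R > 0" and e: "norm e = 1"
    and deriv: "\<And>x t. ((\<lambda>s. g (x + s *\<^sub>R e)) has_real_derivative dg (x + t *\<^sub>R e)) (at t)"
    and cdg: "continuous_on UNIV dg"
    and out: "\<And>x. norm x \<ge> R \<Longrightarrow> g x = 0"
  shows "(\<integral>\<^sup>+x. ennreal ((g x)\<^sup>2) \<partial>lborel) \<le> ennreal (4*R\<^sup>2) * (\<integral>\<^sup>+x. ennreal ((dg x)\<^sup>2) \<partial>lborel)"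
proof -
  have P: "pair_sigma_finite (lborel::(real^'n) measure) (lborel::real measure)"
    by (rule pair_sigma_finite.intro) (rule lborel.sigma_finite_measure_axioms)+
  have dgm[measurable]: "dg \<in> borel_measurable borel" using cdg by (rule borel_measurable_continuous_onI)
  let ?A = "{-2*R..0::real}"
  let ?H = "\<lambda>x t. ennreal ((dg (x + t *\<^sub>R e))\<^sup>2) * indicator ?A t"
  let ?Q = "\<integral>\<^sup>+x. ennreal ((dg x)\<^sup>2) \<partial>lborel"
  have Hm: "case_prod ?H \<in> borel_measurable (lborel \<Otimes>\<^sub>M lborel)"
    by measurable
  have pw: "ennreal ((g x)\<^sup>2) \<le> ennreal (2*R) * (\<integral>\<^sup>+t. ?H x t \<partial>lborel)" for x
  proof -
    have cf: "continuous_on ?A (\<lambda>t. (dg (x + t *\<^sub>R e))\<^sup>2)"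
      by (auto intro!: continuous_intros continuous_on_compose2[OF cdg])
    have hi: "((\<lambda>t. (dg (x + t *\<^sub>R e))\<^sup>2) has_integral integral ?A (\<lambda>t. (dg (x + t *\<^sub>R e))\<^sup>2)) ?A"
      using integrable_continuous_interval[OF cf] by (rule integrable_integral)
    have eqI: "(\<integral>\<^sup>+t. ?H x t \<partial>lborel) = ennreal (integral ?A (\<lambda>t. (dg (x + t *\<^sub>R e))\<^sup>2))"
      by (rule nn_integral_has_integral_lebesgue'[OF _ hi]) simp
    have nn: "0 \<le> integral ?A (\<lambda>t. (dg (x + t *\<^sub>R e))\<^sup>2)"
      by (rule integral_nonneg[OF integrable_continuous_interval[OF cf]]) simp
    have "(g x)\<^sup>2 \<le> (2*R) * integral ?A (\<lambda>t. (dg (x + t *\<^sub>R e))\<^sup>2)"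
      by (rule poincare_pointwise[OF R e deriv cdg out])
    then have "ennreal ((g x)\<^sup>2) \<le> ennreal ((2*R) * integral ?A (\<lambda>t. (dg (x + t *\<^sub>R e))\<^sup>2))"
      by (rule ennreal_leI)
    also have "\<dots> = ennreal (2*R) * ennreal (integral ?A (\<lambda>t. (dg (x + t *\<^sub>R e))\<^sup>2))"
      using R nn by (simp add: ennreal_mult)
    finally show ?thesis unfolding eqI .
  qed
  have shift: "(\<integral>\<^sup>+x. ennreal ((dg (x + t *\<^sub>R e))\<^sup>2) \<partial>lborel) = ?Q" for t
  proof -
    have "?Q = (\<integral>\<^sup>+x. ennreal ((dg x)\<^sup>2) \<partial>(distr lborel borel ((+) (t *\<^sub>R e))))"
      by (simp add: lborel_distr_plus)
    also have "\<dots> = (\<integral>\<^sup>+x. ennreal ((dg (t *\<^sub>R e + x))\<^sup>2) \<partial>lborel)"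
      by (subst nn_integral_distr) auto
    finally show ?thesis by (simp add: add.commute)
  qed
  have "(\<integral>\<^sup>+x. ennreal ((g x)\<^sup>2) \<partial>lborel) \<le> (\<integral>\<^sup>+x. ennreal (2*R) * (\<integral>\<^sup>+t. ?H x t \<partial>lborel) \<partial>lborel)"
    by (rule nn_integral_mono) (rule pw)
  also have "\<dots> = ennreal (2*R) * (\<integral>\<^sup>+x. (\<integral>\<^sup>+t. ?H x t \<partial>lborel) \<partial>lborel)"
    by (rule nn_integral_cmult) measurable
  also have "(\<integral>\<^sup>+x. (\<integral>\<^sup>+t. ?H x t \<partial>lborel) \<partial>lborel) = (\<integral>\<^sup>+t. (\<integral>\<^sup>+x. ?H x t \<partial>lborel) \<partial>lborel)"
    by (rule pair_sigma_finite.Fubini'[OF P Hm, symmetric])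
  also have "\<dots> = (\<integral>\<^sup>+t. ?Q * indicator ?A t \<partial>lborel)"
  proof (rule nn_integral_cong)
    fix t :: real
    show "(\<integral>\<^sup>+x. ?H x t \<partial>lborel) = ?Q * indicator ?A t"
      by (subst nn_integral_multc) (auto simp: shift)
  qed
  also have "\<dots> = ?Q * emeasure lborel ?A"
    by (rule nn_integral_cmult_indicator) simp
  also have "emeasure lborel ?A = ennreal (2*R)" using R by simp
  finally have "(\<integral>\<^sup>+x. ennreal ((g x)\<^sup>2) \<partial>lborel) \<le> ennreal (2*R) * (?Q * ennreal (2*R))" .
  also have "\<dots> = ennreal (4*R\<^sup>2) * ?Q"
  proof -
    have "ennreal (4*R\<^sup>2) = ennreal (2*R) * ennreal (2*R)"
      using R by (simp add: ennreal_mult[symmetric] power2_eq_square)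
    then show ?thesis by (simp add: mult.commute mult.left_commute)
  qed
  finally show ?thesis .
qed

lemma ip_nn:
  fixes f :: "real^'n \<Rightarrow> real"
  assumes cf: "continuous_on UNIV f" and zero: "\<And>x. x \<notin> D \<Longrightarrow> f x = 0"
    and bd: "D \<subseteq> cball 0 R"
  shows "ennreal (ip D f f) = (\<integral>\<^sup>+x. ennreal ((f x)\<^sup>2) \<partial>lborel)"
proof -
  have fm[measurable]: "f \<in> borel_measurable borel" using cf by (rule borel_measurable_continuous_onI)
  have "integrable lborel (\<lambda>x. indicator (cball 0 R) x *\<^sub>R (f x)\<^sup>2)"
    by (rule borel_integrable_compact) (auto intro!: continuous_intros continuous_on_subset[OF cf])
  moreover have e1: "(\<lambda>x. indicator (cball 0 R) x *\<^sub>R (f x)\<^sup>2) = (\<lambda>x. (f x)\<^sup>2)"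
  proof
    fix x show "indicator (cball 0 R) x *\<^sub>R (f x)\<^sup>2 = (f x)\<^sup>2"
    proof (cases "x \<in> cball 0 R")
      case False
      then have "x \<notin> D" using bd by blast
      then show ?thesis using zero[of x] by simp
    qed simp
  qed
  ultimately have int: "integrable lborel (\<lambda>x. (f x)\<^sup>2)" by simp
  have e2: "(\<lambda>x. indicator D x *\<^sub>R (f x * f x)) = (\<lambda>x. (f x)\<^sup>2)"
  proof
    fix x show "indicator D x *\<^sub>R (f x * f x) = (f x)\<^sup>2"
      using zero[of x] by (cases "x \<in> D") (auto simp: power2_eq_square)
  qed
  have "ip D f f = integral\<^sup>L lebesgue (\<lambda>x. (f x)\<^sup>2)"
    unfolding ip_def set_lebesgue_integral_def e2 ..
  also have "\<dots> = integral\<^sup>L lborel (\<lambda>x. (f x)\<^sup>2)"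
    by (rule integral_completion) simp
  finally have "ennreal (ip D f f) = ennreal (integral\<^sup>L lborel (\<lambda>x. (f x)\<^sup>2))" by simp
  also have "\<dots> = (\<integral>\<^sup>+x. ennreal ((f x)\<^sup>2) \<partial>lborel)"
    by (rule nn_integral_eq_integral[OF int, symmetric]) simp
  finally show ?thesis .
qed

lemma poincare_ip:
  fixes g dg :: "real^'n \<Rightarrow> real" and e :: "real^'n"
  assumes R: "R > 0" and e: "norm e = 1" and bd: "D \<subseteq> ball 0 R"
    and deriv: "\<And>x t. ((\<lambda>s. g (x + s *\<^sub>R e)) has_real_derivative dg (x + t *\<^sub>R e)) (at t)"
    and cg: "continuous_on UNIV g" and cdg: "continuous_on UNIV dg"
    and out: "\<And>x. x \<notin> D \<Longrightarrow> g x = 0" "\<And>x. x \<notin> D \<Longrightarrow> dg x = 0"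
  shows "ip D g g \<le> 4*R\<^sup>2 * ip D dg dg"
proof -
  have bd': "D \<subseteq> cball 0 R" using bd by auto
  have out': "g x = 0" if "norm x \<ge> R" for x
  proof -
    have "x \<notin> ball 0 R" using that by simp
    then have "x \<notin> D" using bd by blast
    then show ?thesis by (rule out(1))
  qed
  have a: "ennreal (ip D g g) = (\<integral>\<^sup>+x. ennreal ((g x)\<^sup>2) \<partial>lborel)"
    by (rule ip_nn[OF cg out(1) bd'])
  have b: "ennreal (ip D dg dg) = (\<integral>\<^sup>+x. ennreal ((dg x)\<^sup>2) \<partial>lborel)"
    by (rule ip_nn[OF cdg out(2) bd'])
  have "ennreal (ip D g g) \<le> ennreal (4*R\<^sup>2) * ennreal (ip D dg dg)"
    unfolding a b by (rule poincare_nn[OF R e deriv cdg out'])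
  also have "\<dots> = ennreal (4*R\<^sup>2 * ip D dg dg)"
    by (simp add: ennreal_mult ip_nonneg)
  finally show ?thesis
    by (subst (asm) ennreal_le_iff) (auto intro!: mult_nonneg_nonneg ip_nonneg)
qed



lemma open_sets_lebesgue: "open (D::(real^'n) set) \<Longrightarrow> D \<in> sets lebesgue"
  using borel_open[of D] by (intro sets_completionI_sets) simp

lemma set_integral_sum':
  fixes f :: "'i \<Rightarrow> 'a \<Rightarrow> real"
  assumes "\<And>i. i \<in> I \<Longrightarrow> set_integrable M A (f i)"
  shows "(LINT x:A|M. (\<Sum>i\<in>I. f i x)) = (\<Sum>i\<in>I. (LINT x:A|M. f i x))"
proof -
  have "(LINT x:A|M. (\<Sum>i\<in>I. f i x)) = integral\<^sup>L M (\<lambda>x. \<Sum>i\<in>I. indicator A x *\<^sub>R f i x)"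
    unfolding set_lebesgue_integral_def by (simp add: sum_distrib_left)
  also have "\<dots> = (\<Sum>i\<in>I. integral\<^sup>L M (\<lambda>x. indicator A x *\<^sub>R f i x))"
    by (rule Bochner_Integration.integral_sum[where I=I and M=M and f="\<lambda>i x. indicator A x *\<^sub>R f i x"]) (use assms in \<open>auto simp: set_integrable_def\<close>)
  finally show ?thesis unfolding set_lebesgue_integral_def .
qed

lemma L2_diff:
  assumes D: "D \<in> sets lebesgue" and f: "f \<in> L2 D" and g: "g \<in> L2 D"
  shows "(\<lambda>x. f x - g x) \<in> L2 D"
  using L2_lin[OF D f g, of 1 "-1"] by simp

lemma L2_lin3:
  assumes D: "D \<in> sets lebesgue" and f: "f \<in> L2 D" and g: "g \<in> L2 D" and h: "h \<in> L2 D"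
  shows "(\<lambda>x. a * f x + b * g x + c * h x) \<in> L2 D"
  using L2_lin[OF D L2_lin[OF D f g, of a b] h, of 1 c] by simp

lemma ip_lin3_left:
  assumes D: "D \<in> sets lebesgue" and f: "f \<in> L2 D" and g: "g \<in> L2 D" and h: "h \<in> L2 D" and k: "k \<in> L2 D"
  shows "ip D (\<lambda>x. a * f x + b * g x + c * h x) k = a * ip D f k + b * ip D g k + c * ip D h k"
proof -
  have "ip D (\<lambda>x. a * f x + b * g x + c * h x) k = ip D (\<lambda>x. 1 * (a * f x + b * g x) + c * h x) k"
    by simp
  also have "\<dots> = 1 * ip D (\<lambda>x. a * f x + b * g x) k + c * ip D h k"
    by (rule ip_lin_left[OF D L2_lin[OF D f g] h k])
  also have "ip D (\<lambda>x. a * f x + b * g x) k = a * ip D f k + b * ip D g k"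
    by (rule ip_lin_left[OF D f g k])
  finally show ?thesis by simp
qed

lemma ip_lin3_right:
  assumes D: "D \<in> sets lebesgue" and f: "f \<in> L2 D" and g: "g \<in> L2 D" and h: "h \<in> L2 D" and k: "k \<in> L2 D"
  shows "ip D k (\<lambda>x. a * f x + b * g x + c * h x) = a * ip D k f + b * ip D k g + c * ip D k h"
  using ip_lin3_left[OF assms] by (simp add: ip_sym)

lemma ip_diff_right:
  assumes D: "D \<in> sets lebesgue" and f: "f \<in> L2 D" and g: "g \<in> L2 D" and k: "k \<in> L2 D"
  shows "ip D k (\<lambda>x. f x - g x) = ip D k f - ip D k g"
  using ip_lin_left[OF D f g k, of 1 "-1"] by (simp add: ip_sym)

lemma ip_le_gen:
  assumes D: "D \<in> sets lebesgue" and X: "X \<in> L2 D" and Y: "Y \<in> L2 D"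
    and A1: "A1 \<in> L2 D" and B1: "B1 \<in> L2 D" and A2: "A2 \<in> L2 D" and B2: "B2 \<in> L2 D"
    and A3: "A3 \<in> L2 D" and B3: "B3 \<in> L2 D"
    and le: "\<And>x. x \<in> D \<Longrightarrow> X x * Y x \<le> p * (A1 x * B1 x) + q * (A2 x * B2 x) + r * (A3 x * B3 x)"
  shows "ip D X Y \<le> p * ip D A1 B1 + q * ip D A2 B2 + r * ip D A3 B3"
proof -
  have i1: "set_integrable lebesgue D (\<lambda>x. p * (A1 x * B1 x))"
    by (rule set_integrable_mult_right) (rule L2_mult_integrable[OF D A1 B1])
  have i2: "set_integrable lebesgue D (\<lambda>x. q * (A2 x * B2 x))"
    by (rule set_integrable_mult_right) (rule L2_mult_integrable[OF D A2 B2])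
  have i3: "set_integrable lebesgue D (\<lambda>x. r * (A3 x * B3 x))"
    by (rule set_integrable_mult_right) (rule L2_mult_integrable[OF D A3 B3])
  have i12: "set_integrable lebesgue D (\<lambda>x. p * (A1 x * B1 x) + q * (A2 x * B2 x))"
    using i1 i2 by (rule set_integral_add(1))
  have i123: "set_integrable lebesgue D (\<lambda>x. p * (A1 x * B1 x) + q * (A2 x * B2 x) + r * (A3 x * B3 x))"
    using i12 i3 by (rule set_integral_add(1))
  have "ip D X Y \<le> (LINT x:D|lebesgue. p * (A1 x * B1 x) + q * (A2 x * B2 x) + r * (A3 x * B3 x))"
    unfolding ip_def by (rule set_integral_mono[OF L2_mult_integrable[OF D X Y] i123 le])
  also have "\<dots> = (LINT x:D|lebesgue. p * (A1 x * B1 x) + q * (A2 x * B2 x)) + (LINT x:D|lebesgue. r * (A3 x * B3 x))"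
    by (rule set_integral_add(2)[OF i12 i3])
  also have "(LINT x:D|lebesgue. p * (A1 x * B1 x) + q * (A2 x * B2 x)) = (LINT x:D|lebesgue. p * (A1 x * B1 x)) + (LINT x:D|lebesgue. q * (A2 x * B2 x))"
    by (rule set_integral_add(2)[OF i1 i2])
  finally show ?thesis unfolding ip_def by (simp add: set_integral_mult_right)
qed

lemma ip_zero_fun:
  assumes "\<And>x. x \<in> D \<Longrightarrow> f x = 0" shows "ip D f g = 0"
proof -
  have "ip D f g = ip D (\<lambda>_. 0) g" by (rule ip_cong) (simp add: assms)
  also have "\<dots> = 0" unfolding ip_def by simp
  finally show ?thesis .
qed



lemma sol_data:
  assumes D: "D \<in> sets lebesgue" and h: "h \<in> L2 D" and ps: "poisson_sol D h y"
  obtains G \<psi> where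
    "y \<in> L2 D" "continuous_on (closure D) y" "\<forall>x\<in>frontier D. y x = 0"
    "\<forall>i. (\<lambda>x. G x $ i) \<in> L2 D" "\<forall>k. test_fn D (\<psi> k)"
    "(\<lambda>k. ip D (\<lambda>x. y x - \<psi> k x) (\<lambda>x. y x - \<psi> k x) +
        (\<Sum>i\<in>UNIV. ip D (\<lambda>x. G x $ i - pd (\<psi> k) i x) (\<lambda>x. G x $ i - pd (\<psi> k) i x))) \<longlonglongrightarrow> 0"
    "\<forall>\<phi>. test_fn D \<phi> \<longrightarrow> (\<Sum>i\<in>UNIV. ip D (\<lambda>x. G x $ i) (pd \<phi> i)) = ip D h \<phi>"
proof -
  from ps have yH: "y \<in> H01 D" and cy: "continuous_on (closure D) y" and fr: "\<forall>x\<in>frontier D. y x = 0"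
    and ex: "\<exists>G. weak_grad D y G \<and> (\<forall>\<phi>. test_fn D \<phi> \<longrightarrow>
        (LINT x:D|lebesgue. (\<Sum>i\<in>UNIV. G x $ i * pd \<phi> i x)) = (LINT x:D|lebesgue. h x * \<phi> x))"
    unfolding poisson_sol_def by auto
  from yH obtain G \<psi> where yL: "y \<in> L2 D" and wg: "weak_grad D y G" and GL: "\<forall>i. (\<lambda>x. G x $ i) \<in> L2 D"
    and t\<psi>: "\<forall>k. test_fn D (\<psi> k)"
    and conv: "(\<lambda>k. LINT x:D|lebesgue. (y x - \<psi> k x)\<^sup>2 + (\<Sum>i\<in>UNIV. (G x $ i - pd (\<psi> k) i x)\<^sup>2)) \<longlonglongrightarrow> 0"
    unfolding H01_def by blast
  from ex obtain G' where wg': "weak_grad D y G'" and eq': "\<forall>\<phi>. test_fn D \<phi> \<longrightarrow>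
        (LINT x:D|lebesgue. (\<Sum>i\<in>UNIV. G' x $ i * pd \<phi> i x)) = (LINT x:D|lebesgue. h x * \<phi> x)"
    by blast
  have E: "(LINT x:D|lebesgue. (y x - \<psi> k x)\<^sup>2 + (\<Sum>i\<in>UNIV. (G x $ i - pd (\<psi> k) i x)\<^sup>2)) =
      ip D (\<lambda>x. y x - \<psi> k x) (\<lambda>x. y x - \<psi> k x) +
        (\<Sum>i\<in>UNIV. ip D (\<lambda>x. G x $ i - pd (\<psi> k) i x) (\<lambda>x. G x $ i - pd (\<psi> k) i x))" for k
  proof -
    have aL: "(\<lambda>x. y x - \<psi> k x) \<in> L2 D" using L2_diff[OF D yL tf_L2[OF D t\<psi>[rule_format]]] .
    have bL: "(\<lambda>x. G x $ i - pd (\<psi> k) i x) \<in> L2 D" for i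
      using L2_diff[OF D GL[rule_format] tf_L2[OF D tf_pd[OF t\<psi>[rule_format]]]] .
    have ia: "set_integrable lebesgue D (\<lambda>x. (y x - \<psi> k x) * (y x - \<psi> k x))"
      by (rule L2_mult_integrable[OF D aL aL])
    have ib: "set_integrable lebesgue D (\<lambda>x. (G x $ i - pd (\<psi> k) i x) * (G x $ i - pd (\<psi> k) i x))" for i
      by (rule L2_mult_integrable[OF D bL bL])
    have isum: "set_integrable lebesgue D (\<lambda>x. \<Sum>i\<in>UNIV. (G x $ i - pd (\<psi> k) i x) * (G x $ i - pd (\<psi> k) i x))"
    proof -
      have "integrable lebesgue (\<lambda>x. \<Sum>i\<in>UNIV. indicator D x *\<^sub>R ((G x $ i - pd (\<psi> k) i x) * (G x $ i - pd (\<psi> k) i x)))"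
        by (rule Bochner_Integration.integrable_sum[where I=UNIV and M=lebesgue and f="\<lambda>i x. indicator D x *\<^sub>R ((G x $ i - pd (\<psi> k) i x) * (G x $ i - pd (\<psi> k) i x))"])
          (use ib in \<open>simp add: set_integrable_def\<close>)
      then show ?thesis unfolding set_integrable_def scaleR_sum_right .
    qed
    have "(LINT x:D|lebesgue. (y x - \<psi> k x)\<^sup>2 + (\<Sum>i\<in>UNIV. (G x $ i - pd (\<psi> k) i x)\<^sup>2)) =
        (LINT x:D|lebesgue. (y x - \<psi> k x) * (y x - \<psi> k x) + (\<Sum>i\<in>UNIV. (G x $ i - pd (\<psi> k) i x) * (G x $ i - pd (\<psi> k) i x)))"
      by (simp add: power2_eq_square)
    also have "\<dots> = (LINT x:D|lebesgue. (y x - \<psi> k x) * (y x - \<psi> k x)) +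
        (LINT x:D|lebesgue. (\<Sum>i\<in>UNIV. (G x $ i - pd (\<psi> k) i x) * (G x $ i - pd (\<psi> k) i x)))"
      by (rule set_integral_add(2)[OF ia isum])
    also have "(LINT x:D|lebesgue. (\<Sum>i\<in>UNIV. (G x $ i - pd (\<psi> k) i x) * (G x $ i - pd (\<psi> k) i x)))
        = (\<Sum>i\<in>UNIV. (LINT x:D|lebesgue. (G x $ i - pd (\<psi> k) i x) * (G x $ i - pd (\<psi> k) i x)))"
      by (rule set_integral_sum') (rule ib)
    finally show ?thesis unfolding ip_def .
  qed
  have key: "(\<Sum>i\<in>UNIV. ip D (\<lambda>x. G x $ i) (pd \<phi> i)) = ip D h \<phi>" if t: "test_fn D \<phi>" for \<phi>
  proof -
    have each: "ip D (\<lambda>x. G x $ i) (pd \<phi> i) = (LINT x:D|lebesgue. G' x $ i * pd \<phi> i x)" for i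
    proof -
      have t': "test_fn D (pd \<phi> i)" by (rule tf_pd[OF t])
      have "(LINT x:D|lebesgue. y x * pd (pd \<phi> i) i x) = - (LINT x:D|lebesgue. G x $ i * pd \<phi> i x)"
        using wg t' unfolding weak_grad_def by blast
      moreover have "(LINT x:D|lebesgue. y x * pd (pd \<phi> i) i x) = - (LINT x:D|lebesgue. G' x $ i * pd \<phi> i x)"
        using wg' t' unfolding weak_grad_def by blast
      ultimately show ?thesis unfolding ip_def by simp
    qed
    have ints: "set_integrable lebesgue D (\<lambda>x. G' x $ i * pd \<phi> i x)" for i
      using wg' tf_pd[OF t, of i] unfolding weak_grad_def by blast
    have "(\<Sum>i\<in>UNIV. ip D (\<lambda>x. G x $ i) (pd \<phi> i)) = (\<Sum>i\<in>UNIV. (LINT x:D|lebesgue. G' x $ i * pd \<phi> i x))"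
      using each by simp
    also have "\<dots> = (LINT x:D|lebesgue. (\<Sum>i\<in>UNIV. G' x $ i * pd \<phi> i x))"
      by (rule set_integral_sum'[symmetric]) (rule ints)
    also have "\<dots> = ip D h \<phi>" using eq' t unfolding ip_def by blast
    finally show ?thesis .
  qed
  show thesis
  proof (rule that[of G \<psi>])
    show "y \<in> L2 D" by (rule yL)
    show "continuous_on (closure D) y" by (rule cy)
    show "\<forall>x\<in>frontier D. y x = 0" by (rule fr)
    show "\<forall>i. (\<lambda>x. G x $ i) \<in> L2 D" by (rule GL)
    show "\<forall>k. test_fn D (\<psi> k)" by (rule t\<psi>)
    show "(\<lambda>k. ip D (\<lambda>x. y x - \<psi> k x) (\<lambda>x. y x - \<psi> k x) +
        (\<Sum>i\<in>UNIV. ip D (\<lambda>x. G x $ i - pd (\<psi> k) i x) (\<lambda>x. G x $ i - pd (\<psi> k) i x))) \<longlonglongrightarrow> 0"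
      using conv unfolding E .
    show "\<forall>\<phi>. test_fn D \<phi> \<longrightarrow> (\<Sum>i\<in>UNIV. ip D (\<lambda>x. G x $ i) (pd \<phi> i)) = ip D h \<phi>"
      using key by blast
  qed
qed



lemma cont_ae_zero:
  fixes V :: "real^'n \<Rightarrow> real"
  assumes Do: "open D" and cV: "continuous_on D V" and ae: "AE x in lebesgue. x \<in> D \<longrightarrow> V x = 0"
  shows "\<forall>x\<in>D. V x = 0"
proof (rule ccontr)
  assume "\<not> (\<forall>x\<in>D. V x = 0)"
  then obtain x where xD: "x \<in> D" and Vx: "V x \<noteq> 0" by blast
  obtain e1 where e1: "e1 > 0" "\<forall>y. dist x y < e1 \<longrightarrow> V y \<noteq> 0"
    using continuous_on_open_avoid[OF cV Do xD Vx] by blast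
  obtain e2 where e2: "e2 > 0" "ball x e2 \<subseteq> D" using Do xD open_contains_ball by blast
  define e where "e = min e1 e2"
  have e: "e > 0" using e1 e2 by (simp add: e_def)
  from ae obtain N where N: "{y \<in> space lebesgue. \<not> (y \<in> D \<longrightarrow> V y = 0)} \<subseteq> N" "emeasure lebesgue N = 0" "N \<in> sets lebesgue"
    by (rule AE_E)
  have "ball x e \<subseteq> N"
  proof
    fix y assume y: "y \<in> ball x e"
    then have "y \<in> D" using e2 by (auto simp: e_def)
    moreover have "V y \<noteq> 0" using e1 y by (auto simp: e_def)
    ultimately show "y \<in> N" using N(1) by auto
  qed
  then have "emeasure lebesgue (ball x e) \<le> emeasure lebesgue N"
    by (rule emeasure_mono) (rule N(3))
  then have "emeasure lebesgue (ball x e) = 0" using N(2) by simp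
  then have "emeasure lborel (ball x e) = 0" by (simp add: emeasure_completion)
  then have "measure lborel (ball x e) = 0" by (simp add: measure_def)
  then show False using content_ball_pos[OF e, of x] by simp
qed

lemma sq3: "((p::real) + q + r) * (p + q + r) \<le> 3 * (p * p) + 3 * (q * q) + 3 * (r * r)"
proof -
  have "0 \<le> (p - q)\<^sup>2 + (q - r)\<^sup>2 + (p - r)\<^sup>2" by simp
  then show ?thesis by (simp add: power2_eq_square algebra_simps)
qed

lemma sq3': "((a::real)*A + b*B + c*C)*(a*A + b*B + c*C) \<le> 3*a\<^sup>2*(A*A) + 3*b\<^sup>2*(B*B) + 3*c\<^sup>2*(C*C)"
  using sq3[of "a*A" "b*B" "c*C"] by (simp add: power2_eq_square mult_ac)

lemma half_ineq: "(u::real) * v \<le> 1/2 * (u * u) + 1/2 * (v * v) + 0 * w"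
proof -
  have "0 \<le> (u - v)\<^sup>2" by simp
  then show ?thesis by (simp add: power2_eq_square algebra_simps)
qed

lemma two_ineq: "(d::real) * d \<le> 2 * ((w - d) * (w - d)) + 2 * (w * w) + 0 * z"
proof -
  have "0 \<le> (d - 2*w)\<^sup>2" by simp
  then show ?thesis by (simp add: power2_eq_square algebra_simps)
qed

lemma poisson_comb:
  fixes D :: "(real^'n) set"
  assumes Do: "open D" and Db: "bounded D"
    and h1: "h1 \<in> L2 D" and h2: "h2 \<in> L2 D" and h3: "h3 \<in> L2 D"
    and p1: "poisson_sol D h1 y1" and p2: "poisson_sol D h2 y2" and p3: "poisson_sol D h3 y3"
    and hz: "\<And>x. x \<in> D \<Longrightarrow> a * h1 x + b * h2 x + c * h3 x = 0"
  shows "\<forall>x\<in>closure D. a * y1 x + b * y2 x + c * y3 x = 0"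
proof -
  have DL: "D \<in> sets lebesgue" by (rule open_sets_lebesgue[OF Do])
  obtain R where R: "0 < R" "D \<subseteq> ball 0 R" using bounded_subset_ballD[OF Db] by blast
  obtain G1 \<psi>1 where y1L: "y1 \<in> L2 D" and cy1: "continuous_on (closure D) y1" and fr1: "\<forall>x\<in>frontier D. y1 x = 0"
    and G1L: "\<forall>i. (\<lambda>x. G1 x $ i) \<in> L2 D" and t1: "\<forall>k. test_fn D (\<psi>1 k)"
    and e1lim: "(\<lambda>k. ip D (\<lambda>x. y1 x - \<psi>1 k x) (\<lambda>x. y1 x - \<psi>1 k x) +
        (\<Sum>i\<in>UNIV. ip D (\<lambda>x. G1 x $ i - pd (\<psi>1 k) i x) (\<lambda>x. G1 x $ i - pd (\<psi>1 k) i x))) \<longlonglongrightarrow> 0"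
    and key1: "\<forall>\<phi>. test_fn D \<phi> \<longrightarrow> (\<Sum>i\<in>UNIV. ip D (\<lambda>x. G1 x $ i) (pd \<phi> i)) = ip D h1 \<phi>"
    by (rule sol_data[OF DL h1 p1])
  obtain G2 \<psi>2 where y2L: "y2 \<in> L2 D" and cy2: "continuous_on (closure D) y2" and fr2: "\<forall>x\<in>frontier D. y2 x = 0"
    and G2L: "\<forall>i. (\<lambda>x. G2 x $ i) \<in> L2 D" and t2: "\<forall>k. test_fn D (\<psi>2 k)"
    and e2lim: "(\<lambda>k. ip D (\<lambda>x. y2 x - \<psi>2 k x) (\<lambda>x. y2 x - \<psi>2 k x) +
        (\<Sum>i\<in>UNIV. ip D (\<lambda>x. G2 x $ i - pd (\<psi>2 k) i x) (\<lambda>x. G2 x $ i - pd (\<psi>2 k) i x))) \<longlonglongrightarrow> 0"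
    and key2: "\<forall>\<phi>. test_fn D \<phi> \<longrightarrow> (\<Sum>i\<in>UNIV. ip D (\<lambda>x. G2 x $ i) (pd \<phi> i)) = ip D h2 \<phi>"
    by (rule sol_data[OF DL h2 p2])
  obtain G3 \<psi>3 where y3L: "y3 \<in> L2 D" and cy3: "continuous_on (closure D) y3" and fr3: "\<forall>x\<in>frontier D. y3 x = 0"
    and G3L: "\<forall>i. (\<lambda>x. G3 x $ i) \<in> L2 D" and t3: "\<forall>k. test_fn D (\<psi>3 k)"
    and e3lim: "(\<lambda>k. ip D (\<lambda>x. y3 x - \<psi>3 k x) (\<lambda>x. y3 x - \<psi>3 k x) +
        (\<Sum>i\<in>UNIV. ip D (\<lambda>x. G3 x $ i - pd (\<psi>3 k) i x) (\<lambda>x. G3 x $ i - pd (\<psi>3 k) i x))) \<longlonglongrightarrow> 0"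
    and key3: "\<forall>\<phi>. test_fn D \<phi> \<longrightarrow> (\<Sum>i\<in>UNIV. ip D (\<lambda>x. G3 x $ i) (pd \<phi> i)) = ip D h3 \<phi>"
    by (rule sol_data[OF DL h3 p3])
  define W where "W = (\<lambda>i x. a * G1 x $ i + b * G2 x $ i + c * G3 x $ i)"
  define V where "V = (\<lambda>x. a * y1 x + b * y2 x + c * y3 x)"
  define P where "P = (\<lambda>k x. a * \<psi>1 k x + b * \<psi>2 k x + c * \<psi>3 k x)"
  define dP where "dP = (\<lambda>k i x. a * pd (\<psi>1 k) i x + b * pd (\<psi>2 k) i x + c * pd (\<psi>3 k) i x)"
  define e1 where "e1 = (\<lambda>k. ip D (\<lambda>x. y1 x - \<psi>1 k x) (\<lambda>x. y1 x - \<psi>1 k x) +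
        (\<Sum>i\<in>UNIV. ip D (\<lambda>x. G1 x $ i - pd (\<psi>1 k) i x) (\<lambda>x. G1 x $ i - pd (\<psi>1 k) i x)))"
  define e2 where "e2 = (\<lambda>k. ip D (\<lambda>x. y2 x - \<psi>2 k x) (\<lambda>x. y2 x - \<psi>2 k x) +
        (\<Sum>i\<in>UNIV. ip D (\<lambda>x. G2 x $ i - pd (\<psi>2 k) i x) (\<lambda>x. G2 x $ i - pd (\<psi>2 k) i x)))"
  define e3 where "e3 = (\<lambda>k. ip D (\<lambda>x. y3 x - \<psi>3 k x) (\<lambda>x. y3 x - \<psi>3 k x) +
        (\<Sum>i\<in>UNIV. ip D (\<lambda>x. G3 x $ i - pd (\<psi>3 k) i x) (\<lambda>x. G3 x $ i - pd (\<psi>3 k) i x)))"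
  define E where "E = (\<lambda>k. ip D (\<lambda>x. V x - P k x) (\<lambda>x. V x - P k x) +
        (\<Sum>i\<in>UNIV. ip D (\<lambda>x. W i x - dP k i x) (\<lambda>x. W i x - dP k i x)))"
  define Q where "Q = (\<Sum>i\<in>UNIV. ip D (W i) (W i))"
  have \<psi>1L: "\<psi>1 k \<in> L2 D" for k by (rule tf_L2[OF DL t1[rule_format]])
  have \<psi>2L: "\<psi>2 k \<in> L2 D" for k by (rule tf_L2[OF DL t2[rule_format]])
  have \<psi>3L: "\<psi>3 k \<in> L2 D" for k by (rule tf_L2[OF DL t3[rule_format]])
  have d1L: "pd (\<psi>1 k) i \<in> L2 D" for k i by (rule tf_L2[OF DL tf_pd[OF t1[rule_format]]])
  have d2L: "pd (\<psi>2 k) i \<in> L2 D" for k i by (rule tf_L2[OF DL tf_pd[OF t2[rule_format]]])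
  have d3L: "pd (\<psi>3 k) i \<in> L2 D" for k i by (rule tf_L2[OF DL tf_pd[OF t3[rule_format]]])
  have WL: "W i \<in> L2 D" for i
    unfolding W_def by (rule L2_lin3[OF DL G1L[rule_format] G2L[rule_format] G3L[rule_format]])
  have VL: "V \<in> L2 D" unfolding V_def by (rule L2_lin3[OF DL y1L y2L y3L])
  have PL: "P k \<in> L2 D" for k unfolding P_def by (rule L2_lin3[OF DL \<psi>1L \<psi>2L \<psi>3L])
  have dPL: "dP k i \<in> L2 D" for k i unfolding dP_def by (rule L2_lin3[OF DL d1L d2L d3L])
  have A1L: "(\<lambda>x. y1 x - \<psi>1 k x) \<in> L2 D" for k by (rule L2_diff[OF DL y1L \<psi>1L])
  have A2L: "(\<lambda>x. y2 x - \<psi>2 k x) \<in> L2 D" for k by (rule L2_diff[OF DL y2L \<psi>2L])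
  have A3L: "(\<lambda>x. y3 x - \<psi>3 k x) \<in> L2 D" for k by (rule L2_diff[OF DL y3L \<psi>3L])
  have B1L: "(\<lambda>x. G1 x $ i - pd (\<psi>1 k) i x) \<in> L2 D" for k i by (rule L2_diff[OF DL G1L[rule_format] d1L])
  have B2L: "(\<lambda>x. G2 x $ i - pd (\<psi>2 k) i x) \<in> L2 D" for k i by (rule L2_diff[OF DL G2L[rule_format] d2L])
  have B3L: "(\<lambda>x. G3 x $ i - pd (\<psi>3 k) i x) \<in> L2 D" for k i by (rule L2_diff[OF DL G3L[rule_format] d3L])
  have VPL: "(\<lambda>x. V x - P k x) \<in> L2 D" for k by (rule L2_diff[OF DL VL PL])
  have WdL: "(\<lambda>x. W i x - dP k i x) \<in> L2 D" for k i by (rule L2_diff[OF DL WL dPL])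

  have S2: "(\<Sum>i\<in>UNIV. ip D (W i) (pd \<phi> i)) = 0" if t: "test_fn D \<phi>" for \<phi>
  proof -
    have \<phi>L: "\<phi> \<in> L2 D" by (rule tf_L2[OF DL t])
    have pL: "pd \<phi> i \<in> L2 D" for i by (rule tf_L2[OF DL tf_pd[OF t]])
    have each: "ip D (W i) (pd \<phi> i) = a * ip D (\<lambda>x. G1 x $ i) (pd \<phi> i) + b * ip D (\<lambda>x. G2 x $ i) (pd \<phi> i)
        + c * ip D (\<lambda>x. G3 x $ i) (pd \<phi> i)" for i
      unfolding W_def by (rule ip_lin3_left[OF DL G1L[rule_format] G2L[rule_format] G3L[rule_format] pL])
    have "(\<Sum>i\<in>UNIV. ip D (W i) (pd \<phi> i)) = a * (\<Sum>i\<in>UNIV. ip D (\<lambda>x. G1 x $ i) (pd \<phi> i))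
        + b * (\<Sum>i\<in>UNIV. ip D (\<lambda>x. G2 x $ i) (pd \<phi> i)) + c * (\<Sum>i\<in>UNIV. ip D (\<lambda>x. G3 x $ i) (pd \<phi> i))"
      unfolding each by (simp add: sum.distrib sum_distrib_left)
    also have "\<dots> = a * ip D h1 \<phi> + b * ip D h2 \<phi> + c * ip D h3 \<phi>"
      using key1 key2 key3 t by simp
    also have "\<dots> = ip D (\<lambda>x. a * h1 x + b * h2 x + c * h3 x) \<phi>"
      by (rule ip_lin3_left[OF DL h1 h2 h3 \<phi>L, symmetric])
    also have "\<dots> = 0" by (rule ip_zero_fun) (rule hz)
    finally show ?thesis .
  qed
  have S3: "(\<Sum>i\<in>UNIV. ip D (W i) (dP k i)) = 0" for k
  proof -
    have each: "ip D (W i) (dP k i) = a * ip D (W i) (pd (\<psi>1 k) i) + b * ip D (W i) (pd (\<psi>2 k) i)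
        + c * ip D (W i) (pd (\<psi>3 k) i)" for i
      unfolding dP_def by (rule ip_lin3_right[OF DL d1L d2L d3L WL])
    have "(\<Sum>i\<in>UNIV. ip D (W i) (dP k i)) = a * (\<Sum>i\<in>UNIV. ip D (W i) (pd (\<psi>1 k) i))
        + b * (\<Sum>i\<in>UNIV. ip D (W i) (pd (\<psi>2 k) i)) + c * (\<Sum>i\<in>UNIV. ip D (W i) (pd (\<psi>3 k) i))"
      unfolding each by (simp add: sum.distrib sum_distrib_left)
    also have "\<dots> = 0" using S2[OF t1[rule_format]] S2[OF t2[rule_format]] S2[OF t3[rule_format]] by simp
    finally show ?thesis .
  qed
  have Eb: "E k \<le> 3*a\<^sup>2 * e1 k + 3*b\<^sup>2 * e2 k + 3*c\<^sup>2 * e3 k" for k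
  proof -
    have v: "ip D (\<lambda>x. V x - P k x) (\<lambda>x. V x - P k x) \<le>
        3*a\<^sup>2 * ip D (\<lambda>x. y1 x - \<psi>1 k x) (\<lambda>x. y1 x - \<psi>1 k x)
      + 3*b\<^sup>2 * ip D (\<lambda>x. y2 x - \<psi>2 k x) (\<lambda>x. y2 x - \<psi>2 k x)
      + 3*c\<^sup>2 * ip D (\<lambda>x. y3 x - \<psi>3 k x) (\<lambda>x. y3 x - \<psi>3 k x)"
    proof (rule ip_le_gen[OF DL VPL VPL A1L A1L A2L A2L A3L A3L])
      fix x
      have "V x - P k x = a * (y1 x - \<psi>1 k x) + b * (y2 x - \<psi>2 k x) + c * (y3 x - \<psi>3 k x)"
        by (simp add: V_def P_def algebra_simps)
      then show "(V x - P k x) * (V x - P k x) \<le> 3*a\<^sup>2 * ((y1 x - \<psi>1 k x) * (y1 x - \<psi>1 k x))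
        + 3*b\<^sup>2 * ((y2 x - \<psi>2 k x) * (y2 x - \<psi>2 k x)) + 3*c\<^sup>2 * ((y3 x - \<psi>3 k x) * (y3 x - \<psi>3 k x))"
        using sq3' by simp
    qed
    have w: "ip D (\<lambda>x. W i x - dP k i x) (\<lambda>x. W i x - dP k i x) \<le>
        3*a\<^sup>2 * ip D (\<lambda>x. G1 x $ i - pd (\<psi>1 k) i x) (\<lambda>x. G1 x $ i - pd (\<psi>1 k) i x)
      + 3*b\<^sup>2 * ip D (\<lambda>x. G2 x $ i - pd (\<psi>2 k) i x) (\<lambda>x. G2 x $ i - pd (\<psi>2 k) i x)
      + 3*c\<^sup>2 * ip D (\<lambda>x. G3 x $ i - pd (\<psi>3 k) i x) (\<lambda>x. G3 x $ i - pd (\<psi>3 k) i x)" for i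
    proof (rule ip_le_gen[OF DL WdL WdL B1L B1L B2L B2L B3L B3L])
      fix x
      have "W i x - dP k i x = a * (G1 x $ i - pd (\<psi>1 k) i x) + b * (G2 x $ i - pd (\<psi>2 k) i x)
          + c * (G3 x $ i - pd (\<psi>3 k) i x)"
        by (simp add: W_def dP_def algebra_simps)
      then show "(W i x - dP k i x) * (W i x - dP k i x) \<le>
          3*a\<^sup>2 * ((G1 x $ i - pd (\<psi>1 k) i x) * (G1 x $ i - pd (\<psi>1 k) i x))
        + 3*b\<^sup>2 * ((G2 x $ i - pd (\<psi>2 k) i x) * (G2 x $ i - pd (\<psi>2 k) i x))
        + 3*c\<^sup>2 * ((G3 x $ i - pd (\<psi>3 k) i x) * (G3 x $ i - pd (\<psi>3 k) i x))"
        using sq3' by simp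
    qed
    have ws: "(\<Sum>i\<in>UNIV. ip D (\<lambda>x. W i x - dP k i x) (\<lambda>x. W i x - dP k i x)) \<le>
        3*a\<^sup>2 * (\<Sum>i\<in>UNIV. ip D (\<lambda>x. G1 x $ i - pd (\<psi>1 k) i x) (\<lambda>x. G1 x $ i - pd (\<psi>1 k) i x))
      + 3*b\<^sup>2 * (\<Sum>i\<in>UNIV. ip D (\<lambda>x. G2 x $ i - pd (\<psi>2 k) i x) (\<lambda>x. G2 x $ i - pd (\<psi>2 k) i x))
      + 3*c\<^sup>2 * (\<Sum>i\<in>UNIV. ip D (\<lambda>x. G3 x $ i - pd (\<psi>3 k) i x) (\<lambda>x. G3 x $ i - pd (\<psi>3 k) i x))"
      unfolding sum_distrib_left sum.distrib[symmetric] by (rule sum_mono) (rule w)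
    show ?thesis using v ws unfolding E_def e1_def e2_def e3_def by (simp add: algebra_simps)
  qed
  have E0: "0 \<le> E k" for k unfolding E_def by (intro add_nonneg_nonneg sum_nonneg ip_nonneg)
  have Elim: "E \<longlonglongrightarrow> 0"
  proof (rule tendsto_sandwich[of "\<lambda>_. 0" E sequentially "\<lambda>k. 3*a\<^sup>2 * e1 k + 3*b\<^sup>2 * e2 k + 3*c\<^sup>2 * e3 k"])
    show "\<forall>\<^sub>F n in sequentially. 0 \<le> E n" using E0 by simp
    show "\<forall>\<^sub>F n in sequentially. E n \<le> 3*a\<^sup>2 * e1 n + 3*b\<^sup>2 * e2 n + 3*c\<^sup>2 * e3 n" using Eb by simp
    show "(\<lambda>_. 0::real) \<longlonglongrightarrow> 0" by simp
    have "(\<lambda>k. 3*a\<^sup>2 * e1 k + 3*b\<^sup>2 * e2 k + 3*c\<^sup>2 * e3 k) \<longlonglongrightarrow> 3*a\<^sup>2 * 0 + 3*b\<^sup>2 * 0 + 3*c\<^sup>2 * 0"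
      using e1lim e2lim e3lim unfolding e1_def[symmetric] e2_def[symmetric] e3_def[symmetric]
      by (intro tendsto_intros)
    then show "(\<lambda>k. 3*a\<^sup>2 * e1 k + 3*b\<^sup>2 * e2 k + 3*c\<^sup>2 * e3 k) \<longlonglongrightarrow> 0" by simp
  qed
  have QE: "Q \<le> E k" for k
  proof -
    have split: "ip D (W i) (W i) = ip D (W i) (\<lambda>x. W i x - dP k i x) + ip D (W i) (dP k i)" for i
      using ip_diff_right[OF DL WL[of i] dPL[of k i] WL[of i]] by simp
    have hb: "ip D (W i) (\<lambda>x. W i x - dP k i x) \<le> 1/2 * ip D (W i) (W i)
        + 1/2 * ip D (\<lambda>x. W i x - dP k i x) (\<lambda>x. W i x - dP k i x) + 0 * ip D (W i) (W i)" for i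
      by (rule ip_le_gen[OF DL WL WdL WL WL WdL WdL WL WL]) (rule half_ineq)
    have "Q = (\<Sum>i\<in>UNIV. ip D (W i) (\<lambda>x. W i x - dP k i x)) + (\<Sum>i\<in>UNIV. ip D (W i) (dP k i))"
      unfolding Q_def by (subst split) (simp add: sum.distrib)
    also have "\<dots> = (\<Sum>i\<in>UNIV. ip D (W i) (\<lambda>x. W i x - dP k i x))" using S3[of k] by simp
    also have "\<dots> \<le> (\<Sum>i\<in>UNIV. 1/2 * ip D (W i) (W i)
        + 1/2 * ip D (\<lambda>x. W i x - dP k i x) (\<lambda>x. W i x - dP k i x) + 0 * ip D (W i) (W i))"
      by (rule sum_mono) (rule hb)
    also have "\<dots> = 1/2 * Q + 1/2 * (\<Sum>i\<in>UNIV. ip D (\<lambda>x. W i x - dP k i x) (\<lambda>x. W i x - dP k i x))"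
      unfolding Q_def by (simp add: sum.distrib sum_distrib_left)
    finally have "Q \<le> 1/2 * Q + 1/2 * (\<Sum>i\<in>UNIV. ip D (\<lambda>x. W i x - dP k i x) (\<lambda>x. W i x - dP k i x))" .
    moreover have "0 \<le> ip D (\<lambda>x. V x - P k x) (\<lambda>x. V x - P k x)" by (rule ip_nonneg)
    ultimately show ?thesis unfolding E_def by linarith
  qed
  have Q0: "Q = 0"
  proof -
    have "Q \<le> 0"
      by (rule tendsto_le[OF trivial_limit_sequentially Elim tendsto_const]) (use QE in simp)
    moreover have "0 \<le> Q" unfolding Q_def by (intro sum_nonneg ip_nonneg)
    ultimately show ?thesis by simp
  qed
  define i0 :: 'n where "i0 = undefined"
  let ?e = "axis i0 (1::real) :: real^'n"
  have VE: "ip D V V \<le> (2 + 16*R\<^sup>2) * E k" for k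
  proof -
    have deriv: "((\<lambda>s. P k (x + s *\<^sub>R ?e)) has_real_derivative dP k i0 (x + t *\<^sub>R ?e)) (at t)" for x t
      unfolding P_def dP_def
      by (intro DERIV_add DERIV_cmult tf_line_deriv[OF t1[rule_format]] tf_line_deriv[OF t2[rule_format]] tf_line_deriv[OF t3[rule_format]])
    have cP: "continuous_on UNIV (P k)" unfolding P_def
      by (intro continuous_intros tf_cont[OF t1[rule_format]] tf_cont[OF t2[rule_format]] tf_cont[OF t3[rule_format]])
    have cdP: "continuous_on UNIV (dP k i0)" unfolding dP_def
      by (intro continuous_intros tf_cont[OF tf_pd[OF t1[rule_format]]] tf_cont[OF tf_pd[OF t2[rule_format]]]
          tf_cont[OF tf_pd[OF t3[rule_format]]])
    have oP: "P k x = 0" if "x \<notin> D" for x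
      unfolding P_def using tf_zero'[OF t1[rule_format] that] tf_zero'[OF t2[rule_format] that]
        tf_zero'[OF t3[rule_format] that] by simp
    have odP: "dP k i0 x = 0" if "x \<notin> D" for x
      unfolding dP_def using tf_zero'[OF tf_pd[OF t1[rule_format]] that] tf_zero'[OF tf_pd[OF t2[rule_format]] that]
        tf_zero'[OF tf_pd[OF t3[rule_format]] that] by simp
    have poi: "ip D (P k) (P k) \<le> 4*R\<^sup>2 * ip D (dP k i0) (dP k i0)"
      by (rule poincare_ip[OF R(1) norm_axis_1 R(2) deriv cP cdP oP odP])
    have dpb: "ip D (dP k i0) (dP k i0) \<le> 2 * ip D (\<lambda>x. W i0 x - dP k i0 x) (\<lambda>x. W i0 x - dP k i0 x)
        + 2 * ip D (W i0) (W i0) + 0 * ip D (W i0) (W i0)"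
      by (rule ip_le_gen[OF DL dPL dPL WdL WdL WL WL WL WL]) (rule two_ineq)
    have m1: "ip D (\<lambda>x. W i0 x - dP k i0 x) (\<lambda>x. W i0 x - dP k i0 x)
        \<le> (\<Sum>i\<in>UNIV. ip D (\<lambda>x. W i x - dP k i x) (\<lambda>x. W i x - dP k i x))"
      by (rule member_le_sum) (auto intro: ip_nonneg)
    have m2: "ip D (W i0) (W i0) \<le> Q" unfolding Q_def
      by (rule member_le_sum) (auto intro: ip_nonneg)
    have vp: "0 \<le> ip D (\<lambda>x. V x - P k x) (\<lambda>x. V x - P k x)" by (rule ip_nonneg)
    have dpb': "ip D (dP k i0) (dP k i0) \<le> 2 * ip D (\<lambda>x. W i0 x - dP k i0 x) (\<lambda>x. W i0 x - dP k i0 x)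
        + 2 * ip D (W i0) (W i0)" using dpb by simp
    have m1': "ip D (\<lambda>x. W i0 x - dP k i0 x) (\<lambda>x. W i0 x - dP k i0 x) \<le> E k"
      using m1 vp unfolding E_def by linarith
    have m2': "ip D (W i0) (W i0) \<le> 0" using m2 Q0 by simp
    have dE: "ip D (dP k i0) (dP k i0) \<le> 2 * E k" using dpb' m1' m2' by linarith
    have m: "4*R\<^sup>2 * ip D (dP k i0) (dP k i0) \<le> 4*R\<^sup>2 * (2 * E k)"
      by (rule mult_left_mono[OF dE]) simp
    have eq: "4*R\<^sup>2 * (2 * E k) = 8*R\<^sup>2 * E k" by (simp add: algebra_simps)
    have PE: "ip D (P k) (P k) \<le> 8*R\<^sup>2 * E k" using order_trans[OF poi m] unfolding eq .
    have vb: "ip D V V \<le> 2 * ip D (\<lambda>x. V x - P k x) (\<lambda>x. V x - P k x) + 2 * ip D (P k) (P k) + 0 * ip D V V"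
    proof (rule ip_le_gen[OF DL VL VL VPL VPL PL PL VL VL])
      fix x show "V x * V x \<le> 2 * ((V x - P k x) * (V x - P k x)) + 2 * (P k x * P k x) + 0 * (V x * V x)"
      proof -
        have "0 \<le> (V x - 2 * P k x)\<^sup>2" by simp
        then show ?thesis by (simp add: power2_eq_square algebra_simps)
      qed
    qed
    have "ip D (\<lambda>x. V x - P k x) (\<lambda>x. V x - P k x) \<le> E k"
      unfolding E_def by (simp add: sum_nonneg ip_nonneg)
    then show ?thesis using vb PE by (simp add: algebra_simps)
  qed
  have VV0: "ip D V V = 0"
  proof -
    have "(\<lambda>k. (2 + 16*R\<^sup>2) * E k) \<longlonglongrightarrow> (2 + 16*R\<^sup>2) * 0"
      by (intro tendsto_intros Elim)
    then have "ip D V V \<le> (2 + 16*R\<^sup>2) * 0"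
      by (rule tendsto_le[OF trivial_limit_sequentially _ tendsto_const]) (use VE in simp)
    then show ?thesis using ip_nonneg[of D V] by simp
  qed
  have ae: "AE x in lebesgue. x \<in> D \<longrightarrow> V x = 0" by (rule ip_zero_AE[OF DL VL VV0])
  have cV: "continuous_on D V" unfolding V_def
    by (intro continuous_intros continuous_on_subset[OF cy1 closure_subset]
        continuous_on_subset[OF cy2 closure_subset] continuous_on_subset[OF cy3 closure_subset])
  have VD: "\<forall>x\<in>D. V x = 0" by (rule cont_ae_zero[OF Do cV ae])
  show ?thesis
  proof
    fix x assume x: "x \<in> closure D"
    show "a * y1 x + b * y2 x + c * y3 x = 0"
    proof (cases "x \<in> D")
      case True then show ?thesis using VD unfolding V_def by blast
    next
      case False
      then have "x \<in> frontier D" using x Do by (simp add: frontier_def interior_open)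
      then show ?thesis using fr1 fr2 fr3 by simp
    qed
  qed
qed



lemma S_repr:
  fixes D :: "(real^'n) set" and \<phi> :: "'m::finite \<Rightarrow> real^'n \<Rightarrow> real"
  assumes Do: "open D" and Db: "bounded D" and f0: "f0 \<in> L2 D" and \<phi>L: "\<forall>i. \<phi> i \<in> L2 D"
    and uL: "u \<in> L2 D" and Ainv: "\<forall>h\<in>L2 D. poisson_sol D h (Ainv h)"
  shows "\<forall>x\<in>closure D. Shat Ainv f0 \<phi> u (x, z) =
     Ainv (\<lambda>x'. u x' + f0 x') x + (\<Sum>i\<in>UNIV. z $ i * Ainv (\<phi> i) x)"
proof -
  have DL: "D \<in> sets lebesgue" by (rule open_sets_lebesgue[OF Do])
  define hJ where "hJ = (\<lambda>J x'. u x' + f0 x' + (\<Sum>i\<in>J. z $ i * \<phi> i x'))"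
  have h0: "hJ {} = (\<lambda>x'. u x' + f0 x')" unfolding hJ_def by simp
  have uf: "(\<lambda>x'. u x' + f0 x') \<in> L2 D" using L2_lin[OF DL uL f0, of 1 1] by simp
  have allJ: "finite J \<Longrightarrow> hJ J \<in> L2 D \<and> (\<forall>x\<in>closure D. Ainv (hJ J) x = Ainv (hJ {}) x + (\<Sum>i\<in>J. z $ i * Ainv (\<phi> i) x))"
    for J :: "'m set"
  proof (induction J rule: finite_induct)
    case empty
    then show ?case using uf h0 by simp
  next
    case (insert j J)
    have hL: "hJ J \<in> L2 D" and IH: "\<forall>x\<in>closure D. Ainv (hJ J) x = Ainv (hJ {}) x + (\<Sum>i\<in>J. z $ i * Ainv (\<phi> i) x)"
      using insert.IH by auto
    have eqh: "hJ (insert j J) = (\<lambda>x. 1 * hJ J x + z $ j * \<phi> j x)"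
      unfolding hJ_def using insert.hyps by (simp add: algebra_simps)
    have hL': "hJ (insert j J) \<in> L2 D" unfolding eqh by (rule L2_lin[OF DL hL \<phi>L[rule_format]])
    have comb: "\<forall>x\<in>closure D. 1 * Ainv (hJ J) x + z $ j * Ainv (\<phi> j) x + (-1) * Ainv (hJ (insert j J)) x = 0"
    proof (rule poisson_comb[OF Do Db hL \<phi>L[rule_format] hL'])
      show "poisson_sol D (hJ J) (Ainv (hJ J))" using Ainv hL by blast
      show "poisson_sol D (\<phi> j) (Ainv (\<phi> j))" using Ainv \<phi>L by blast
      show "poisson_sol D (hJ (insert j J)) (Ainv (hJ (insert j J)))" using Ainv hL' by blast
      fix x show "1 * hJ J x + z $ j * \<phi> j x + (-1) * hJ (insert j J) x = 0"
        unfolding eqh by simp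
    qed
    show ?case
    proof (intro conjI ballI)
      show "hJ (insert j J) \<in> L2 D" by (rule hL')
      fix x assume x: "x \<in> closure D"
      have "Ainv (hJ (insert j J)) x = Ainv (hJ J) x + z $ j * Ainv (\<phi> j) x"
        using comb x by simp
      also have "\<dots> = Ainv (hJ {}) x + (\<Sum>i\<in>insert j J. z $ i * Ainv (\<phi> i) x)"
        using IH x insert.hyps by simp
      finally show "Ainv (hJ (insert j J)) x = Ainv (hJ {}) x + (\<Sum>i\<in>insert j J. z $ i * Ainv (\<phi> i) x)" .
    qed
  qed
  have main: "\<forall>x\<in>closure D. Ainv (hJ UNIV) x = Ainv (hJ {}) x + (\<Sum>i\<in>UNIV. z $ i * Ainv (\<phi> i) x)"
  proof -
    have fu: "finite (UNIV::'m set)" by simp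
    show ?thesis by (rule allJ[OF fu, THEN conjunct2])
  qed
  have "(\<lambda>x'. u x' + rhs_f f0 \<phi> x' z) = hJ UNIV"
    unfolding hJ_def rhs_f_def by (simp add: add.assoc)
  then have "Shat Ainv f0 \<phi> u (x, z) = Ainv (hJ UNIV) x" for x
    unfolding Shat_def by simp
  then show ?thesis using main h0 by simp
qed

lemma S_cont:
  fixes D :: "(real^'n) set" and \<phi> :: "'m::finite \<Rightarrow> real^'n \<Rightarrow> real" and \<Xi> :: "(real^'m) set"
  assumes Do: "open D" and Db: "bounded D" and f0: "f0 \<in> L2 D" and \<phi>L: "\<forall>i. \<phi> i \<in> L2 D"
    and uL: "u \<in> L2 D" and Ainv: "\<forall>h\<in>L2 D. poisson_sol D h (Ainv h)"
  shows "continuous_on (closure D \<times> \<Xi>) (Shat Ainv f0 \<phi> u)"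
proof -
  have DL: "D \<in> sets lebesgue" by (rule open_sets_lebesgue[OF Do])
  have uf: "(\<lambda>x'. u x' + f0 x') \<in> L2 D" using L2_lin[OF DL uL f0, of 1 1] by simp
  have c0: "continuous_on (closure D) (Ainv (\<lambda>x'. u x' + f0 x'))"
    using Ainv uf unfolding poisson_sol_def by blast
  have ci: "continuous_on (closure D) (Ainv (\<phi> i))" for i
    using Ainv \<phi>L unfolding poisson_sol_def by blast
  have fstK: "fst ` (closure D \<times> \<Xi>) \<subseteq> closure D" by auto
  have c0': "continuous_on (closure D \<times> \<Xi>) (\<lambda>p. Ainv (\<lambda>x'. u x' + f0 x') (fst p))"
    by (rule continuous_on_compose2[OF c0 continuous_on_fst[OF continuous_on_id] fstK])
  have ci': "continuous_on (closure D \<times> \<Xi>) (\<lambda>p. Ainv (\<phi> i) (fst p))" for i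
    by (rule continuous_on_compose2[OF ci continuous_on_fst[OF continuous_on_id] fstK])
  have "continuous_on (closure D \<times> \<Xi>)
      (\<lambda>p. Ainv (\<lambda>x'. u x' + f0 x') (fst p) + (\<Sum>i\<in>UNIV. snd p $ i * Ainv (\<phi> i) (fst p)))"
    by (intro continuous_intros c0' ci' continuous_on_component continuous_on_snd continuous_on_id)
  then show ?thesis
  proof (rule continuous_on_eq)
    fix p assume "p \<in> closure D \<times> \<Xi>"
    then show "Ainv (\<lambda>x'. u x' + f0 x') (fst p) + (\<Sum>i\<in>UNIV. snd p $ i * Ainv (\<phi> i) (fst p)) = Shat Ainv f0 \<phi> u p"
      using S_repr[OF Do Db f0 \<phi>L uL Ainv, of "snd p"] by (cases p) auto
  qed
qed



lemma INF_mult_ennreal: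
  fixes c :: ennreal and f :: "'i \<Rightarrow> ennreal"
  assumes c: "c < top" and I: "I \<noteq> {}"
  shows "c * (INF i\<in>I. f i) = (INF i\<in>I. c * f i)"
proof -
  have cont: "continuous_on UNIV (\<lambda>x::ennreal. c * x)"
    by (rule ennreal_continuous_on_cmult[OF c continuous_on_id])
  have "(\<lambda>x. c * x) (Inf (f ` I)) = Inf ((\<lambda>x. c * x) ` (f ` I))"
  proof (rule continuous_at_Inf_mono)
    show "mono (\<lambda>x::ennreal. c * x)" by (auto simp: mono_def mult_left_mono)
    show "continuous (at_right (Inf (f ` I))) (\<lambda>x. c * x)"
      using cont by (simp add: continuous_on_eq_continuous_within continuous_at_imp_continuous_at_within)
    show "f ` I \<noteq> {}" using I by simp
    show "bdd_below (f ` I)" by simp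
  qed
  then show ?thesis by (simp add: image_comp)
qed

lemma regular_scale:
  assumes reg: "regular_measure \<mu>" and c: "c < top"
  shows "regular_measure (scale_measure c \<mu>)"
  unfolding regular_measure_def
proof (intro ballI conjI)
  fix A assume "A \<in> sets (scale_measure c \<mu>)"
  then have A: "A \<in> sets \<mu>" by simp
  have ne: "{U. open U \<and> A \<subseteq> U} \<noteq> {}" by auto
  have "emeasure (scale_measure c \<mu>) A = c * emeasure \<mu> A" by simp
  also have "emeasure \<mu> A = (INF U\<in>{U. open U \<and> A \<subseteq> U}. emeasure \<mu> U)"
    using reg A unfolding regular_measure_def by blast
  also have "c * \<dots> = (INF U\<in>{U. open U \<and> A \<subseteq> U}. c * emeasure \<mu> U)"
    by (rule INF_mult_ennreal[OF c ne])
  finally show "emeasure (scale_measure c \<mu>) A = (INF U\<in>{U. open U \<and> A \<subseteq> U}. emeasure (scale_measure c \<mu>) U)"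
    by simp
  have "emeasure (scale_measure c \<mu>) A = c * emeasure \<mu> A" by simp
  also have "emeasure \<mu> A = (SUP K\<in>{K. compact K \<and> K \<subseteq> A}. emeasure \<mu> K)"
    using reg A unfolding regular_measure_def by blast
  also have "c * \<dots> = (SUP K\<in>{K. compact K \<and> K \<subseteq> A}. c * emeasure \<mu> K)"
    by (rule SUP_mult_left_ennreal)
  finally show "emeasure (scale_measure c \<mu>) A = (SUP K\<in>{K. compact K \<and> K \<subseteq> A}. emeasure (scale_measure c \<mu>) K)"
    by simp
qed

lemma regular_return:
  fixes p0 :: "'a::metric_space"
  shows "regular_measure (return borel p0)"
  unfolding regular_measure_def
proof (intro ballI conjI)
  fix A assume "A \<in> sets (return borel p0)"
  then have A: "A \<in> sets borel" by simp
  have em: "emeasure (return borel p0) B = indicator B p0" if "B \<in> sets borel" for B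
    using that by simp
  show "emeasure (return borel p0) A = (INF U\<in>{U. open U \<and> A \<subseteq> U}. emeasure (return borel p0) U)"
  proof (cases "p0 \<in> A")
    case True
    have "(INF U\<in>{U. open U \<and> A \<subseteq> U}. emeasure (return borel p0) U) = (INF U\<in>{U. open U \<and> A \<subseteq> U}. 1)"
      by (rule INF_cong) (use True in \<open>auto simp: em\<close>)
    also have "\<dots> = 1" by (rule INF_const) auto
    finally show ?thesis using True em[OF A] by simp
  next
    case False
    have "(INF U\<in>{U. open U \<and> A \<subseteq> U}. emeasure (return borel p0) U) \<le> emeasure (return borel p0) (- {p0})"
      by (rule INF_lower) (use False in auto)
    also have "\<dots> = 0" by (subst em) auto
    finally show ?thesis using False em[OF A] by simp
  qed
  show "emeasure (return borel p0) A = (SUP K\<in>{K. compact K \<and> K \<subseteq> A}. emeasure (return borel p0) K)"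
  proof (cases "p0 \<in> A")
    case True
    have le: "(SUP K\<in>{K. compact K \<and> K \<subseteq> A}. emeasure (return borel p0) K) \<le> 1"
      by (rule SUP_least) (auto simp: em compact_imp_closed borel_closed indicator_def)
    have "emeasure (return borel p0) {p0} \<le> (SUP K\<in>{K. compact K \<and> K \<subseteq> A}. emeasure (return borel p0) K)"
      by (rule SUP_upper) (use True in auto)
    then have "1 \<le> (SUP K\<in>{K. compact K \<and> K \<subseteq> A}. emeasure (return borel p0) K)" by simp
    then show ?thesis using le True em[OF A] by simp
  next
    case False
    have "(SUP K\<in>{K. compact K \<and> K \<subseteq> A}. emeasure (return borel p0) K) \<le> 0"
    proof (rule SUP_least)
      fix K assume "K \<in> {K. compact K \<and> K \<subseteq> A}"
      then have "K \<in> sets borel" "p0 \<notin> K" using False by (auto simp: compact_imp_closed borel_closed)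
      then show "emeasure (return borel p0) K \<le> 0" by simp
    qed
    then show ?thesis using False em[OF A] by simp
  qed
qed

lemma supp_return: "measure_support (return borel (p0::'a::metric_space)) \<subseteq> {p0}"
proof
  fix q assume q: "q \<in> measure_support (return borel p0)"
  show "q \<in> {p0}"
  proof (rule ccontr)
    assume "q \<notin> {p0}"
    then have d: "dist q p0 > 0" by simp
    have "emeasure (return borel p0) (ball q (dist q p0)) > 0"
      using q d unfolding measure_support_def by blast
    then show False by simp
  qed
qed

lemma supp_scale:
  assumes "c \<noteq> 0" "c < top"
  shows "measure_support (scale_measure c \<mu>) = measure_support \<mu>"
proof -
  have "0 < c" using assms(1) not_gr_zero by blast
  then show ?thesis unfolding measure_support_def by (simp add: ennreal_zero_less_mult_iff)
qed

lemma supp_null: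
  fixes \<mu> :: "'a::{metric_space, second_countable_topology} measure"
  assumes S: "sets \<mu> = sets borel"
  shows "UNIV - measure_support \<mu> \<in> null_sets \<mu>"
proof -
  define F where "F = {ball p e | p e. 0 < e \<and> emeasure \<mu> (ball p e) = 0}"
  have eqF: "UNIV - measure_support \<mu> = \<Union>F"
  proof
    show "UNIV - measure_support \<mu> \<subseteq> \<Union>F"
    proof
      fix x assume "x \<in> UNIV - measure_support \<mu>"
      then obtain e where e: "e > 0" "\<not> emeasure \<mu> (ball x e) > 0" unfolding measure_support_def by auto
      then have "ball x e \<in> F" unfolding F_def by (auto simp: not_gr_zero)
      then show "x \<in> \<Union>F" using e(1) by (intro UnionI[of "ball x e"]) auto
    qed
    show "\<Union>F \<subseteq> UNIV - measure_support \<mu>"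
    proof
      fix x assume "x \<in> \<Union>F"
      then obtain p e where pe: "0 < e" "emeasure \<mu> (ball p e) = 0" "x \<in> ball p e" unfolding F_def by auto
      define d where "d = e - dist p x"
      have d: "d > 0" using pe by (simp add: d_def)
      have sub: "ball x d \<subseteq> ball p e"
      proof
        fix y assume "y \<in> ball x d"
        then have "dist x y < d" by simp
        moreover have "dist p y \<le> dist p x + dist x y" by (rule dist_triangle)
        ultimately show "y \<in> ball p e" by (simp add: d_def)
      qed
      have "emeasure \<mu> (ball x d) \<le> emeasure \<mu> (ball p e)"
        by (rule emeasure_mono[OF sub]) (simp add: S)
      then have "\<not> emeasure \<mu> (ball x d) > 0" using pe by simp
      then show "x \<in> UNIV - measure_support \<mu>" using d unfolding measure_support_def by auto
    qed
  qed
  have "\<And>S. S \<in> F \<Longrightarrow> open S" unfolding F_def by auto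
  then obtain F' where F': "F' \<subseteq> F" "countable F'" "\<Union>F' = \<Union>F" by (rule Lindelof)
  have "(\<Union>i\<in>F'. i) \<in> null_sets \<mu>"
  proof (rule null_sets_UN'[OF F'(2)])
    fix i assume "i \<in> F'"
    then have "i \<in> F" using F' by auto
    then show "i \<in> null_sets \<mu>" unfolding F_def by (auto simp: S intro!: null_setsI)
  qed
  then have "\<Union>F \<in> null_sets \<mu>" using F'(3) by simp
  then show ?thesis unfolding eqF .
qed

lemma scale_density:
  assumes "0 \<le> r"
  shows "scale_measure (ennreal r) M = density M (\<lambda>_. ennreal r)"
proof (rule measure_eqI)
  show "sets (scale_measure (ennreal r) M) = sets (density M (\<lambda>_. ennreal r))" by simp
  fix A assume "A \<in> sets (scale_measure (ennreal r) M)"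
  then have "A \<in> sets M" by simp
  then show "emeasure (scale_measure (ennreal r) M) A = emeasure (density M (\<lambda>_. ennreal r)) A"
    by (simp add: emeasure_density_const)
qed

lemma set_integral_scale:
  fixes f :: "'a \<Rightarrow> real"
  assumes r: "0 \<le> r" and f: "(\<lambda>x. indicator K x *\<^sub>R f x) \<in> borel_measurable M"
  shows "(LINT x:K|scale_measure (ennreal r) M. f x) = r * (LINT x:K|M. f x)"
proof -
  have "(LINT x:K|scale_measure (ennreal r) M. f x) = integral\<^sup>L (density M (\<lambda>_. ennreal r)) (\<lambda>x. indicator K x *\<^sub>R f x)"
    unfolding set_lebesgue_integral_def scale_density[OF r] ..
  also have "\<dots> = integral\<^sup>L M (\<lambda>x. r *\<^sub>R (indicator K x *\<^sub>R f x))"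
    by (rule integral_density[OF f]) (use r in auto)
  also have "\<dots> = r * (LINT x:K|M. f x)"
    unfolding set_lebesgue_integral_def by simp
  finally show ?thesis .
qed



lemma int_bdd_integrable:
  fixes \<mu> :: "'a::topological_space measure" and S :: "'a \<Rightarrow> real"
  assumes fm: "finite_measure \<mu>" and sb: "sets \<mu> = sets borel" and K: "K \<in> sets borel"
    and cS: "continuous_on K S" and bS: "\<forall>q\<in>K. \<bar>S q\<bar> \<le> C" and C: "0 \<le> C"
  shows "integrable \<mu> (\<lambda>p. indicator K p *\<^sub>R S p)"
proof -
  have mb: "(\<lambda>p. indicator K p *\<^sub>R S p) \<in> borel_measurable borel"
    by (rule borel_measurable_continuous_on_indicator[OF K cS])
  have m: "(\<lambda>p. indicator K p *\<^sub>R S p) \<in> borel_measurable \<mu>"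
    unfolding measurable_cong_sets[OF sb refl] by (rule mb)
  show ?thesis
  proof (rule finite_measure.integrable_const_bound[OF fm _ m])
    show "AE x in \<mu>. norm (indicator K x *\<^sub>R S x) \<le> C"
      using bS C by (intro AE_I2) (auto simp: indicator_def)
  qed
qed

lemma neg_int:
  fixes \<mu> :: "'a::topological_space measure" and S :: "'a \<Rightarrow> real"
  assumes fm: "finite_measure \<mu>" and sb: "sets \<mu> = sets borel" and K: "K \<in> sets borel"
    and cS: "continuous_on K S" and bS: "\<forall>q\<in>K. \<bar>S q\<bar> \<le> C" and C: "0 \<le> C" and le: "\<forall>q\<in>K. S q \<le> \<alpha>"
    and B: "B \<in> sets borel" "B \<subseteq> K" "measure \<mu> B > 0" and d: "\<delta> > 0" and Bd: "\<forall>q\<in>B. S q \<le> \<alpha> - \<delta>"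
  shows "(LINT p:K|\<mu>. S p - \<alpha>) < 0"
proof -
  have cS': "continuous_on K (\<lambda>p. S p - \<alpha>)" by (intro continuous_intros cS)
  have bS': "\<forall>q\<in>K. \<bar>S q - \<alpha>\<bar> \<le> C + \<bar>\<alpha>\<bar>" using bS by (auto intro: order_trans[OF abs_triangle_ineq4])
  have ig: "integrable \<mu> (\<lambda>p. indicator K p *\<^sub>R (S p - \<alpha>))"
    by (rule int_bdd_integrable[OF fm sb K cS' bS']) (use C in simp)
  have Bs: "B \<in> sets \<mu>" using B sb by simp
  have ih: "integrable \<mu> (\<lambda>p. - \<delta> * indicator B p)"
    using Bs finite_measure.emeasure_finite[OF fm, of B] by (intro integrable_mult_right integrable_real_indicator) (auto simp: less_top)
  have "(LINT p:K|\<mu>. S p - \<alpha>) = integral\<^sup>L \<mu> (\<lambda>p. indicator K p *\<^sub>R (S p - \<alpha>))"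
    unfolding set_lebesgue_integral_def ..
  also have "\<dots> \<le> integral\<^sup>L \<mu> (\<lambda>p. - \<delta> * indicator B p)"
  proof (rule integral_mono[OF ig ih])
    fix p
    show "indicator K p *\<^sub>R (S p - \<alpha>) \<le> - \<delta> * indicator B p"
    proof (cases "p \<in> B")
      case True
      then have "p \<in> K" using B by auto
      then show ?thesis using True Bd by auto
    next
      case False
      then show ?thesis using le by (auto simp: indicator_def)
    qed
  qed
  also have "\<dots> = - \<delta> * measure \<mu> B"
    using sets_eq_imp_space_eq[OF sb] by simp
  also have "\<dots> < 0" using d B(3) by (simp add: mult_pos_pos)
  finally show ?thesis .
qed

lemma meas_tr:
  assumes "sets \<mu> = sets borel" and "f \<in> borel_measurable borel"
  shows "f \<in> borel_measurable \<mu>"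
  unfolding measurable_cong_sets[OF assms(1) refl] by (rule assms(2))



theorem lemma3p15:
  fixes D :: "(real^'n) set" and \<Xi> :: "(real^'m) set"
    and f0 :: "real^'n \<Rightarrow> real" and \<phi> :: "'m \<Rightarrow> real^'n \<Rightarrow> real"
    and \<alpha> :: real
    and F :: "(real^'n \<Rightarrow> real) \<Rightarrow> real" and DF :: "(real^'n \<Rightarrow> real) \<Rightarrow> real"
    and ustar :: "real^'n \<Rightarrow> real"
    and Ainv :: "(real^'n \<Rightarrow> real) \<Rightarrow> (real^'n \<Rightarrow> real)"
  assumes dim: "CARD('n) \<in> {1, 2, 3}"
    and D_open: "open D" and D_bounded: "bounded D" and D_S: "class_S D" and D_ne: "D \<noteq> {}"
    and f0_L2: "f0 \<in> L2 D" and phi_L2: "\<forall>i. \<phi> i \<in> L2 D"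
    and Xi_compact: "compact \<Xi>" and Xi_ne: "\<Xi> \<noteq> {}"
    and F_diff: "L2_frechet_deriv D F ustar DF"
    and ustar_L2: "ustar \<in> L2 D"
    and Ainv: "\<forall>h\<in>L2 D. poisson_sol D h (Ainv h)"
  shows "(\<exists>\<mu> :: ((real^'n) \<times> (real^'m)) measure.
            finite_measure \<mu> \<and> sets \<mu> = sets borel \<and> regular_measure \<mu> \<and>
            emeasure \<mu> (UNIV - closure D \<times> \<Xi>) = 0 \<and>
            (\<forall>h\<in>L2 D. DF h + (LINT p:closure D \<times> \<Xi>|\<mu>. Ainv h (fst p)) = 0) \<and>
            (\<forall>p\<in>closure D \<times> \<Xi>. Shat Ainv f0 \<phi> ustar p \<le> \<alpha>) \<and>
            (LINT p:closure D \<times> \<Xi>|\<mu>. Shat Ainv f0 \<phi> ustar p - \<alpha>) = 0)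
     \<longleftrightarrow>
         (\<exists>lam\<ge>0. \<exists>\<mu> :: ((real^'n) \<times> (real^'m)) measure.
            prob_space \<mu> \<and> sets \<mu> = sets borel \<and> regular_measure \<mu> \<and>
            measure_support \<mu> \<subseteq> Mset D \<Xi> Ainv f0 \<phi> ustar \<and>
            (\<forall>h\<in>L2 D. DF h + lam * (LINT p:closure D \<times> \<Xi>|\<mu>. Ainv h (fst p)) = 0) \<and>
            (SUP q\<in>closure D \<times> \<Xi>. Shat Ainv f0 \<phi> ustar q) \<le> \<alpha> \<and>
            lam * ((SUP q\<in>closure D \<times> \<Xi>. Shat Ainv f0 \<phi> ustar q) - \<alpha>) = 0)"
proof -
  let ?K = "closure D \<times> \<Xi>"
  let ?S = "Shat Ainv f0 \<phi> ustar"
  let ?M = "Mset D \<Xi> Ainv f0 \<phi> ustar"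
  have Kc: "compact ?K" using D_bounded Xi_compact by (simp add: compact_Times)
  have Kne: "?K \<noteq> {}" using D_ne Xi_ne by simp
  have Kcl: "closed ?K" by (rule compact_imp_closed[OF Kc])
  have Kb: "?K \<in> sets borel" by (rule borel_closed[OF Kcl])
  have Sc: "continuous_on ?K ?S" by (rule S_cont[OF D_open D_bounded f0_L2 phi_L2 ustar_L2 Ainv])
  obtain p0 where p0K: "p0 \<in> ?K" and p0max: "\<forall>q\<in>?K. ?S q \<le> ?S p0"
    using continuous_attains_sup[OF Kc Kne Sc] by blast
  have SUPeq: "(SUP q\<in>?K. ?S q) = ?S p0" by (rule cSup_eq_maximum) (use p0K p0max in auto)
  have Meq: "?M = {p \<in> ?K. ?S p = ?S p0}" unfolding Mset_def SUPeq ..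
  obtain C where C: "0 \<le> C" "\<forall>q\<in>?K. \<bar>?S q\<bar> \<le> C"
  proof -
    have "bounded (?S ` ?K)" by (rule compact_imp_bounded[OF compact_continuous_image[OF Sc Kc]])
    then obtain a where "\<forall>x\<in>?S ` ?K. norm x \<le> a" unfolding bounded_iff by blast
    then have "\<forall>q\<in>?K. \<bar>?S q\<bar> \<le> max a 0" by (fastforce intro: le_max_iff_disj[THEN iffD2])
    then show ?thesis using that[of "max a 0"] by simp
  qed
  have Fc: "continuous_on ?K (\<lambda>p. Ainv h (fst p))" if "h \<in> L2 D" for h
  proof -
    have "continuous_on (closure D) (Ainv h)" using Ainv that unfolding poisson_sol_def by blast
    then show ?thesis
      by (rule continuous_on_compose2[OF _ continuous_on_fst[OF continuous_on_id]]) auto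
  qed
  have Fm: "(\<lambda>p. indicator ?K p *\<^sub>R Ainv h (fst p)) \<in> borel_measurable borel" if "h \<in> L2 D" for h
    by (rule borel_measurable_continuous_on_indicator[OF Kb Fc[OF that]])
  have Sc': "continuous_on ?K (\<lambda>p. ?S p - \<alpha>)" by (intro continuous_intros Sc)
  have Sm: "(\<lambda>p. indicator ?K p *\<^sub>R (?S p - \<alpha>)) \<in> borel_measurable borel"
    by (rule borel_measurable_continuous_on_indicator[OF Kb Sc'])
  show ?thesis
  proof
    assume "\<exists>\<mu> :: ((real^'n) \<times> (real^'m)) measure.
            finite_measure \<mu> \<and> sets \<mu> = sets borel \<and> regular_measure \<mu> \<and>
            emeasure \<mu> (UNIV - ?K) = 0 \<and>
            (\<forall>h\<in>L2 D. DF h + (LINT p:?K|\<mu>. Ainv h (fst p)) = 0) \<and>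
            (\<forall>p\<in>?K. ?S p \<le> \<alpha>) \<and> (LINT p:?K|\<mu>. ?S p - \<alpha>) = 0"
    then obtain \<mu> :: "((real^'n) \<times> (real^'m)) measure" where fm: "finite_measure \<mu>" and sb: "sets \<mu> = sets borel"
      and reg: "regular_measure \<mu>" and null: "emeasure \<mu> (UNIV - ?K) = 0"
      and DFe: "\<forall>h\<in>L2 D. DF h + (LINT p:?K|\<mu>. Ainv h (fst p)) = 0"
      and le: "\<forall>p\<in>?K. ?S p \<le> \<alpha>" and int0: "(LINT p:?K|\<mu>. ?S p - \<alpha>) = 0"
      by blast
    have Sp0: "?S p0 \<le> \<alpha>" using le p0K by blast
    have SUPle: "(SUP q\<in>?K. ?S q) \<le> \<alpha>" using SUPeq Sp0 by simp
    define lam where "lam = measure \<mu> ?K"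
    have lam0: "lam \<ge> 0" by (simp add: lam_def)
    have Ks: "?K \<in> sets \<mu>" using Kb sb by simp
    have emK: "emeasure \<mu> ?K = ennreal lam"
      using finite_measure.emeasure_eq_measure[OF fm] lam_def by simp
    have spU: "space \<mu> = UNIV" using sets_eq_imp_space_eq[OF sb] by simp
    show "\<exists>lam\<ge>0. \<exists>\<mu> :: ((real^'n) \<times> (real^'m)) measure.
            prob_space \<mu> \<and> sets \<mu> = sets borel \<and> regular_measure \<mu> \<and>
            measure_support \<mu> \<subseteq> ?M \<and>
            (\<forall>h\<in>L2 D. DF h + lam * (LINT p:?K|\<mu>. Ainv h (fst p)) = 0) \<and>
            (SUP q\<in>?K. ?S q) \<le> \<alpha> \<and> lam * ((SUP q\<in>?K. ?S q) - \<alpha>) = 0"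
    proof (cases "lam = 0")
      case True
      have DF0: "DF h = 0" if h: "h \<in> L2 D" for h
      proof -
        have "?K \<in> null_sets \<mu>" using emK True Ks by (auto intro: null_setsI)
        then have ae: "AE p in \<mu>. p \<notin> ?K" by (rule AE_not_in)
        have "(LINT p:?K|\<mu>. Ainv h (fst p)) = 0"
          unfolding set_lebesgue_integral_def
          by (rule integral_eq_zero_AE) (use ae in \<open>eventually_elim, simp\<close>)
        then show ?thesis using DFe h by auto
      qed
      let ?\<nu> = "return borel p0"
      have r1: "prob_space ?\<nu>" by (rule prob_space_return) simp
      have r2: "sets ?\<nu> = sets borel" by simp
      have r3: "regular_measure ?\<nu>" by (rule regular_return)
      have r4: "measure_support ?\<nu> \<subseteq> ?M" using supp_return[of p0] p0K unfolding Meq by auto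
      have r5: "\<forall>h\<in>L2 D. DF h + 0 * (LINT p:?K|?\<nu>. Ainv h (fst p)) = 0" using DF0 by simp
      have r7: "(0::real) * ((SUP q\<in>?K. ?S q) - \<alpha>) = 0" by simp
      show ?thesis
        by (rule exI[of _ 0], rule conjI[OF order_refl], rule exI[of _ ?\<nu>]) (intro conjI r1 r2 r3 r4 r5 SUPle r7)
    next
      case False
      then have lpos: "lam > 0" using lam0 by simp
      define \<nu> where "\<nu> = scale_measure (ennreal (1/lam)) \<mu>"
      have emU: "emeasure \<mu> UNIV = ennreal lam"
      proof -
        have "emeasure \<mu> ?K + emeasure \<mu> (UNIV - ?K) = emeasure \<mu> (?K \<union> (UNIV - ?K))"
          by (rule plus_emeasure) (use Ks sb Kb in auto)
        then show ?thesis using emK null by simp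
      qed
      have n1: "prob_space \<nu>"
      proof
        have "emeasure \<nu> (space \<nu>) = ennreal (1/lam) * ennreal lam"
          unfolding \<nu>_def by (simp add: space_scale_measure spU emU)
        also have "\<dots> = ennreal (1/lam * lam)" by (rule ennreal_mult[symmetric]) (use lpos in auto)
        also have "\<dots> = 1" using lpos by simp
        finally show "emeasure \<nu> (space \<nu>) = 1" .
      qed
      have n2: "sets \<nu> = sets borel" unfolding \<nu>_def using sb by simp
      have n3: "regular_measure \<nu>" unfolding \<nu>_def by (rule regular_scale[OF reg]) simp
      have suppeq: "measure_support \<nu> = measure_support \<mu>"
        unfolding \<nu>_def by (rule supp_scale) (use lpos in auto)
      have negc: False if B: "B \<in> sets borel" "B \<subseteq> ?K" "measure \<mu> B > 0" and d: "\<delta> > 0"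
        and Bd: "\<forall>q\<in>B. ?S q \<le> \<alpha> - \<delta>" for B \<delta>
        using neg_int[OF fm sb Kb Sc C(2) C(1) le B d Bd] int0 by simp
      have Sp0eq: "?S p0 = \<alpha>"
      proof (rule ccontr)
        assume "?S p0 \<noteq> \<alpha>"
        then have "?S p0 < \<alpha>" using Sp0 by simp
        then show False
          by (intro negc[of ?K "\<alpha> - ?S p0"]) (use Kb lpos p0max in \<open>auto simp: lam_def\<close>)
      qed
      have n4: "measure_support \<nu> \<subseteq> ?M"
      proof
        fix p assume "p \<in> measure_support \<nu>"
        then have "p \<in> measure_support \<mu>" unfolding suppeq .
        then have ps: "\<forall>e>0. emeasure \<mu> (ball p e) > 0" unfolding measure_support_def by simp
        have pK: "p \<in> ?K"
        proof (rule ccontr)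
          assume "p \<notin> ?K"
          then obtain e where e: "e > 0" "ball p e \<subseteq> - ?K"
            using Kcl open_contains_ball[of "- ?K"] by auto
          have "emeasure \<mu> (ball p e) \<le> emeasure \<mu> (UNIV - ?K)"
            by (rule emeasure_mono) (use e Kb sb in auto)
          then have "emeasure \<mu> (ball p e) = 0" using null by simp
          moreover have "emeasure \<mu> (ball p e) > 0" using ps e(1) by blast
          ultimately show False by simp
        qed
        have pS: "?S p = \<alpha>"
        proof (rule ccontr)
          assume "?S p \<noteq> \<alpha>"
          then have lt: "?S p < \<alpha>" using le pK by force
          define \<delta> where "\<delta> = (\<alpha> - ?S p) / 2"
          have d: "\<delta> > 0" using lt by (simp add: \<delta>_def)
          obtain r where r: "r > 0" "\<forall>q\<in>?K. dist q p < r \<longrightarrow> dist (?S q) (?S p) < \<delta>"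
            using Sc pK d unfolding continuous_on_iff by blast
          let ?B = "?K \<inter> ball p r"
          have Bb: "?B \<in> sets borel" using Kb by auto
          have Bd: "\<forall>q\<in>?B. ?S q \<le> \<alpha> - \<delta>"
          proof
            fix q assume q: "q \<in> ?B"
            then have "dist (?S q) (?S p) < \<delta>" using r by (auto simp: dist_commute)
            then have "?S q - ?S p < \<delta>" unfolding dist_real_def by (simp add: abs_less_iff)
            then show "?S q \<le> \<alpha> - \<delta>" unfolding \<delta>_def by (simp add: field_simps)
          qed
          have "emeasure \<mu> (ball p r) \<le> emeasure \<mu> (?B \<union> (UNIV - ?K))"
            by (rule emeasure_mono) (use Kb sb in auto)
          also have "\<dots> \<le> emeasure \<mu> ?B + emeasure \<mu> (UNIV - ?K)"
            by (rule emeasure_subadditive) (use Kb sb in auto)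
          finally have "emeasure \<mu> (ball p r) \<le> emeasure \<mu> ?B" using null by simp
          then have "emeasure \<mu> ?B > 0" using ps r by (meson order.strict_trans2)
          then have "measure \<mu> ?B > 0"
            using finite_measure.emeasure_eq_measure[OF fm, of ?B] by simp
          then show False by (intro negc[OF Bb _ _ d Bd]) auto
        qed
        show "p \<in> ?M" unfolding Meq using pK pS Sp0eq by simp
      qed
      have n5: "\<forall>h\<in>L2 D. DF h + lam * (LINT p:?K|\<nu>. Ainv h (fst p)) = 0"
      proof
        fix h assume h: "h \<in> L2 D"
        have "(LINT p:?K|\<nu>. Ainv h (fst p)) = 1/lam * (LINT p:?K|\<mu>. Ainv h (fst p))"
          unfolding \<nu>_def by (rule set_integral_scale) (use lpos meas_tr[OF sb Fm[OF h]] in auto)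
        then show "DF h + lam * (LINT p:?K|\<nu>. Ainv h (fst p)) = 0" using DFe h lpos by simp
      qed
      have n7: "lam * ((SUP q\<in>?K. ?S q) - \<alpha>) = 0" using SUPeq Sp0eq by simp
      show ?thesis
        by (rule exI[of _ lam], rule conjI[OF lam0], rule exI[of _ \<nu>]) (intro conjI n1 n2 n3 n4 n5 SUPle n7)
    qed
  next
    assume "\<exists>lam\<ge>0. \<exists>\<mu> :: ((real^'n) \<times> (real^'m)) measure.
            prob_space \<mu> \<and> sets \<mu> = sets borel \<and> regular_measure \<mu> \<and>
            measure_support \<mu> \<subseteq> ?M \<and>
            (\<forall>h\<in>L2 D. DF h + lam * (LINT p:?K|\<mu>. Ainv h (fst p)) = 0) \<and>
            (SUP q\<in>?K. ?S q) \<le> \<alpha> \<and> lam * ((SUP q\<in>?K. ?S q) - \<alpha>) = 0"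
    then obtain lam and \<nu> :: "((real^'n) \<times> (real^'m)) measure" where l0: "lam \<ge> 0"
      and ps: "prob_space \<nu>" and sb: "sets \<nu> = sets borel" and reg: "regular_measure \<nu>"
      and supp: "measure_support \<nu> \<subseteq> ?M"
      and DFe: "\<forall>h\<in>L2 D. DF h + lam * (LINT p:?K|\<nu>. Ainv h (fst p)) = 0"
      and SUPle: "(SUP q\<in>?K. ?S q) \<le> \<alpha>" and comp: "lam * ((SUP q\<in>?K. ?S q) - \<alpha>) = 0"
      by blast
    define \<mu> where "\<mu> = scale_measure (ennreal lam) \<nu>"
    have spU: "space \<nu> = UNIV" using sets_eq_imp_space_eq[OF sb] by simp
    have m1: "finite_measure \<mu>"
    proof
      have "emeasure \<mu> (space \<mu>) = ennreal lam * emeasure \<nu> (space \<nu>)"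
        unfolding \<mu>_def by (simp add: space_scale_measure)
      also have "\<dots> = ennreal lam" using prob_space.emeasure_space_1[OF ps] by simp
      finally show "emeasure \<mu> (space \<mu>) \<noteq> \<infinity>" by simp
    qed
    have m2: "sets \<mu> = sets borel" unfolding \<mu>_def using sb by simp
    have m3: "regular_measure \<mu>" unfolding \<mu>_def by (rule regular_scale[OF reg]) simp
    have Mcl: "closed ?M" unfolding Meq
      by (rule continuous_closed_preimage_constant[OF Sc Kcl])
    have nullM: "UNIV - ?M \<in> null_sets \<nu>"
    proof (rule null_sets_subset[OF supp_null[OF sb]])
      show "UNIV - ?M \<in> sets \<nu>" using Mcl sb by (auto intro: borel_closed)
      show "UNIV - ?M \<subseteq> UNIV - measure_support \<nu>" using supp by auto
    qed
    have MK: "?M \<subseteq> ?K" unfolding Meq by auto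
    have nullK: "UNIV - ?K \<in> null_sets \<nu>"
      by (rule null_sets_subset[OF nullM]) (use Kb sb MK in auto)
    have m4: "emeasure \<mu> (UNIV - ?K) = 0"
      unfolding \<mu>_def using null_setsD1[OF nullK] by simp
    have m5: "\<forall>h\<in>L2 D. DF h + (LINT p:?K|\<mu>. Ainv h (fst p)) = 0"
    proof
      fix h assume h: "h \<in> L2 D"
      have "(LINT p:?K|\<mu>. Ainv h (fst p)) = lam * (LINT p:?K|\<nu>. Ainv h (fst p))"
        unfolding \<mu>_def by (rule set_integral_scale) (use l0 meas_tr[OF sb Fm[OF h]] in auto)
      then show "DF h + (LINT p:?K|\<mu>. Ainv h (fst p)) = 0" using DFe h by simp
    qed
    have m6: "\<forall>p\<in>?K. ?S p \<le> \<alpha>" using p0max SUPeq SUPle by fastforce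
    have m7: "(LINT p:?K|\<mu>. ?S p - \<alpha>) = 0"
    proof -
      have "(LINT p:?K|\<mu>. ?S p - \<alpha>) = lam * (LINT p:?K|\<nu>. ?S p - \<alpha>)"
        unfolding \<mu>_def by (rule set_integral_scale) (use l0 meas_tr[OF sb Sm] in auto)
      also have "\<dots> = 0"
      proof (cases "lam = 0")
        case True then show ?thesis by simp
      next
        case False
        then have eqa: "?S p0 = \<alpha>" using comp SUPeq by simp
        have ae: "AE p in \<nu>. p \<notin> UNIV - ?M" by (rule AE_not_in[OF nullM])
        have "(LINT p:?K|\<nu>. ?S p - \<alpha>) = 0"
          unfolding set_lebesgue_integral_def
        proof (rule integral_eq_zero_AE)
          show "AE p in \<nu>. indicator ?K p *\<^sub>R (?S p - \<alpha>) = 0"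
            using ae by eventually_elim (auto simp: Meq eqa)
        qed
        then show ?thesis by simp
      qed
      finally show ?thesis .
    qed
    show "\<exists>\<mu> :: ((real^'n) \<times> (real^'m)) measure.
            finite_measure \<mu> \<and> sets \<mu> = sets borel \<and> regular_measure \<mu> \<and>
            emeasure \<mu> (UNIV - ?K) = 0 \<and>
            (\<forall>h\<in>L2 D. DF h + (LINT p:?K|\<mu>. Ainv h (fst p)) = 0) \<and>
            (\<forall>p\<in>?K. ?S p \<le> \<alpha>) \<and> (LINT p:?K|\<mu>. ?S p - \<alpha>) = 0"
      by (rule exI[of _ \<mu>]) (intro conjI m1 m2 m3 m4 m5 m6 m7)
  qed
qed

end
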